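(* Let $F\in\mathcal{O}_K[x,z]$ be a non-singular binary quartic form. Suppose that $v(F)\in\{0,1\}$ but $F$ has positive level; if $\mathrm{char}(k)=2$, suppose further that $F$ is non-minimal. Then: (i) the reduction modulo $\pi$ of $F_1(x,z)=\pi^{-v(F)}F(x,z)$ has a triple or quadruple root defined over $k$; (ii) the following procedure replaces $F$ by a $K$-equivalent integral binary quartic of the same level: apply a substitution $(x,z)\leftarrow(m_{11}x+m_{21}z,\ m_{12}x+m_{22}z)$ with $(m_{ij})\in GL_2(\mathcal{O}_K)$ moving the repeated root of $F_1$ mod $\pi$ to $(x:z)=(0:1)$, and then replace $F(x,z)$ by $\pi^{-2}F(\pi x,z)$; (iii) if $F$ is non-minimal, then at most $2$ iterations of the procedure in (ii) produce a binary quartic $F$ with $v(F)\geq2$.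
   Context: $K$ is a field with normalised discrete valuation $v:K^\times\to\mathbb{Z}$, valuation ring $\mathcal{O}_K$, uniformiser $\pi$, and perfect residue field $k=\mathcal{O}_K/\pi\mathcal{O}_K$. For a binary form $F$, $v(F)$ is the minimum of the valuations of its coefficients. A binary quartic $F=ax^4+bx^3z+cx^2z^2+dxz^3+ez^4$ over $K$ is regarded as the genus one model $y^2=F(x,z)$. Binary quartics $F,F'$ are $K$-equivalent if $F'(x,z)=\mu^2F(m_{11}x+m_{21}z,m_{12}x+m_{22}z)$ for some $\mu\in K^\times$ and $(m_{ij})\in GL_2(K)$. Invariants: $I=12ae-3bd+c^2$, $J=72ace-27ad^2-27b^2e+9bcd-2c^3$, $c_4=2^4I$, $c_6=2^5J$, $\Delta(F)=(c_4^3-c_6^2)/1728$; $F$ is non-singular if $\Delta(F)\ne0$. Then $y^2=F$ defines a smooth genus one curve whose Jacobian $E$ has minimal discriminant $\Delta_E$ over $K$, and $v(\Delta(F))=v(\Delta_E)+12\ell$ for an integer $\ell$, the level of $F$. $F$ is integral if $F\in\mathcal{O}_K[x,z]$; an integral $F$ is minimal if $v(\Delta(F))$ is minimal among all integral binary quartics $K$-equivalent to $F$, and non-minimal otherwise. *)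

theory Defs
  imports "HOL-Computational_Algebra.Computational_Algebra"
begin

text \<open>A normalised discrete valuation on a field, given as a function on the nonzero
  elements (its value at 0 is irrelevant and never used).\<close>

definition discrete_valuation :: "('a::field \<Rightarrow> int) \<Rightarrow> bool" where
  "discrete_valuation v \<longleftrightarrow>
     (\<forall>x y. x \<noteq> 0 \<longrightarrow> y \<noteq> 0 \<longrightarrow> v (x * y) = v x + v y) \<and>
     (\<forall>x y. x \<noteq> 0 \<longrightarrow> y \<noteq> 0 \<longrightarrow> x + y \<noteq> 0 \<longrightarrow> min (v x) (v y) \<le> v (x + y)) \<and>
     (\<forall>n. \<exists>x. x \<noteq> 0 \<and> v x = n)"

text \<open>vge v n x: \<open>v(x) \<ge> n\<close> with the convention \<open>v(0) = \<infinity>\<close>.\<close>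
definition vge :: "('a::field \<Rightarrow> int) \<Rightarrow> int \<Rightarrow> 'a \<Rightarrow> bool" where
  "vge v n x \<longleftrightarrow> x = 0 \<or> n \<le> v x"

definition in_O :: "('a::field \<Rightarrow> int) \<Rightarrow> 'a \<Rightarrow> bool" where
  "in_O v x \<longleftrightarrow> vge v 0 x"

text \<open>The residue field \<open>k = O_K/\<pi>O_K\<close> is perfect: whenever \<open>char k = p > 0\<close>
  (i.e. the prime \<open>p\<close> lies in \<open>\<pi>O_K\<close>) the Frobenius of \<open>k\<close> is surjective.\<close>
definition residue_field_perfect :: "('a::field \<Rightarrow> int) \<Rightarrow> bool" where
  "residue_field_perfect v \<longleftrightarrow>
     (\<forall>p::nat. prime p \<longrightarrow> vge v 1 (of_nat p) \<longrightarrow>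
        (\<forall>x. in_O v x \<longrightarrow> (\<exists>y. in_O v y \<and> vge v 1 (x - y ^ p))))"

definition residue_char_2 :: "('a::field \<Rightarrow> int) \<Rightarrow> bool" where
  "residue_char_2 v \<longleftrightarrow> vge v 1 (2::'a)"

text \<open>A binary form of degree \<open>n\<close> is represented by its dehomogenisation
  \<open>F(x,1)\<close>, a polynomial of degree \<open>\<le> n\<close>: the coefficient of \<open>x^i z^(n-i)\<close> is
  coeff F i.  Thus \<open>F = ax^4+bx^3z+cx^2z^2+dxz^3+ez^4\<close> corresponds to
  \<open>[:e,d,c,b,a:]\<close>, and products of forms correspond to products of polynomials.\<close>

definition binary_quartic :: "'a::field poly \<Rightarrow> bool" where
  "binary_quartic F \<longleftrightarrow> degree F \<le> 4"

definition bq_a :: "'a::field poly \<Rightarrow> 'a" where "bq_a F = coeff F 4"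
definition bq_b :: "'a::field poly \<Rightarrow> 'a" where "bq_b F = coeff F 3"
definition bq_c :: "'a::field poly \<Rightarrow> 'a" where "bq_c F = coeff F 2"
definition bq_d :: "'a::field poly \<Rightarrow> 'a" where "bq_d F = coeff F 1"
definition bq_e :: "'a::field poly \<Rightarrow> 'a" where "bq_e F = coeff F 0"

definition bq_I :: "'a::field poly \<Rightarrow> 'a" where
  "bq_I F = (let a = bq_a F; b = bq_b F; c = bq_c F; d = bq_d F; e = bq_e F in
     12*a*e - 3*b*d + c^2)"

definition bq_J :: "'a::field poly \<Rightarrow> 'a" where
  "bq_J F = (let a = bq_a F; b = bq_b F; c = bq_c F; d = bq_d F; e = bq_e F in
     72*a*c*e - 27*a*d^2 - 27*b^2*e + 9*b*c*d - 2*c^3)"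

definition bq_c4 :: "'a::field poly \<Rightarrow> 'a" where "bq_c4 F = 16 * bq_I F"
definition bq_c6 :: "'a::field poly \<Rightarrow> 'a" where "bq_c6 F = 32 * bq_J F"

text \<open>\<open>\<Delta>(F) = (c4^3 - c6^2)/1728\<close>, written as the integer polynomial it is
  (namely 16 times the classical discriminant), so that it makes sense in every
  characteristic.\<close>
definition bq_disc :: "'a::field poly \<Rightarrow> 'a" where
  "bq_disc F = (let a = bq_a F; b = bq_b F; c = bq_c F; d = bq_d F; e = bq_e F in
     16 * (256*a^3*e^3 - 192*a^2*b*d*e^2 - 128*a^2*c^2*e^2 + 144*a^2*c*d^2*e
       - 27*a^2*d^4 + 144*a*b^2*c*e^2 - 6*a*b^2*d^2*e - 80*a*b*c^2*d*e
       + 18*a*b*c*d^3 + 16*a*c^4*e - 4*a*c^3*d^2 - 27*b^4*e^2 + 18*b^3*c*d*e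
       - 4*b^3*d^3 - 4*b^2*c^3*e + b^2*c^2*d^2))"

definition bq_nonsingular :: "'a::field poly \<Rightarrow> bool" where
  "bq_nonsingular F \<longleftrightarrow> bq_disc F \<noteq> 0"

definition bq_integral :: "('a::field \<Rightarrow> int) \<Rightarrow> 'a poly \<Rightarrow> bool" where
  "bq_integral v F \<longleftrightarrow> (\<forall>i. in_O v (coeff F i))"

definition bq_val :: "('a::field \<Rightarrow> int) \<Rightarrow> 'a poly \<Rightarrow> int" where
  "bq_val v F = Min (v ` {coeff F i | i. i \<le> 4 \<and> coeff F i \<noteq> 0})"

definition bq_subst :: "'a::field poly \<Rightarrow> 'a \<Rightarrow> 'a \<Rightarrow> 'a \<Rightarrow> 'a \<Rightarrow> 'a poly" where
  "bq_subst F m11 m12 m21 m22 =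
     (\<Sum>i\<le>4. smult (coeff F i) ([:m21, m11:] ^ i * [:m22, m12:] ^ (4 - i)))"

definition bq_equiv :: "'a::field poly \<Rightarrow> 'a poly \<Rightarrow> bool" where
  "bq_equiv F F' \<longleftrightarrow> (\<exists>\<mu> m11 m12 m21 m22. \<mu> \<noteq> 0 \<and> m11 * m22 - m12 * m21 \<noteq> 0 \<and>
     F' = smult (\<mu>^2) (bq_subst F m11 m12 m21 m22))"

definition GL2_O :: "('a::field \<Rightarrow> int) \<Rightarrow> 'a \<Rightarrow> 'a \<Rightarrow> 'a \<Rightarrow> 'a \<Rightarrow> bool" where
  "GL2_O v m11 m12 m21 m22 \<longleftrightarrow> in_O v m11 \<and> in_O v m12 \<and> in_O v m21 \<and> in_O v m22 \<and>
     m11 * m22 - m12 * m21 \<noteq> 0 \<and> v (m11 * m22 - m12 * m21) = 0"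

text \<open>For integral \<open>F\<close>: the point \<open>(x0:z0) \<in> P^1(k)\<close> (with \<open>x0, z0 \<in> O_K\<close> not both
  in \<open>\<pi>O_K\<close>) is a root of multiplicity \<open>\<ge> m\<close> of \<open>F mod \<pi>\<close>, i.e. the \<open>m\<close>-th power of
  the linear form \<open>z0 x - x0 z\<close> divides \<open>F mod \<pi>\<close> in \<open>k[x,z]\<close>.\<close>
definition bq_root_mult_ge ::
    "('a::field \<Rightarrow> int) \<Rightarrow> 'a poly \<Rightarrow> 'a \<Rightarrow> 'a \<Rightarrow> nat \<Rightarrow> bool" where
  "bq_root_mult_ge v F x0 z0 m \<longleftrightarrow>
     in_O v x0 \<and> in_O v z0 \<and> \<not> (vge v 1 x0 \<and> vge v 1 z0) \<and>
     (\<exists>H. degree H \<le> 4 - m \<and> (\<forall>i. in_O v (coeff H i)) \<and>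
          (\<forall>i. vge v 1 (coeff (F - [:- x0, z0:] ^ m * H) i)))"

type_synonym 'a weierstrass = "'a \<times> 'a \<times> 'a \<times> 'a \<times> 'a"  \<comment> \<open>\<open>(a1,a2,a3,a4,a6)\<close>\<close>

definition w_disc :: "'a::field weierstrass \<Rightarrow> 'a" where
  "w_disc W = (case W of (a1, a2, a3, a4, a6) \<Rightarrow>
     (let b2 = a1^2 + 4*a2; b4 = 2*a4 + a1*a3; b6 = a3^2 + 4*a6;
          b8 = a1^2*a6 + 4*a2*a6 - a1*a3*a4 + a2*a3^2 - a4^2
      in - (b2^2*b8) - 8*b4^3 - 27*b6^2 + 9*b2*b4*b6))"

definition w_integral :: "('a::field \<Rightarrow> int) \<Rightarrow> 'a weierstrass \<Rightarrow> bool" where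
  "w_integral v W = (case W of (a1, a2, a3, a4, a6) \<Rightarrow>
     in_O v a1 \<and> in_O v a2 \<and> in_O v a3 \<and> in_O v a4 \<and> in_O v a6)"

text \<open>\<open>K\<close>-isomorphism of Weierstrass equations via
  \<open>x = u^2 x' + r, y = u^3 y' + s u^2 x' + t\<close> (Silverman, Table 3.1).\<close>
definition w_iso :: "'a::field weierstrass \<Rightarrow> 'a weierstrass \<Rightarrow> bool" where
  "w_iso W W' = (case W of (a1, a2, a3, a4, a6) \<Rightarrow> case W' of (a1', a2', a3', a4', a6') \<Rightarrow>
     (\<exists>u r s t. u \<noteq> 0 \<and>
        u * a1' = a1 + 2*s \<and>
        u^2 * a2' = a2 - s*a1 + 3*r - s^2 \<and>
        u^3 * a3' = a3 + r*a1 + 2*t \<and>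
        u^4 * a4' = a4 - s*a3 + 2*r*a2 - (t + r*s)*a1 + 3*r^2 - 2*s*t \<and>
        u^6 * a6' = a6 + r*a4 + r^2*a2 + r^3 - t*a3 - t^2 - r*t*a1))"

definition min_disc_val :: "('a::field \<Rightarrow> int) \<Rightarrow> 'a weierstrass \<Rightarrow> int" where
  "min_disc_val v W = int (LEAST n::nat. \<exists>W'. w_integral v W' \<and> w_iso W W' \<and>
      w_disc W' \<noteq> 0 \<and> v (w_disc W') = int n)"

text \<open>The Jacobian of \<open>y^2 = F(x,z)\<close> (char K \<noteq> 2):
  \<open>y^2 = x^3 + c x^2 + (bd - 4ae) x + (ad^2 + b^2 e - 4ace)\<close>; its invariants are
  \<open>c4 = 16 I\<close>, \<open>c6 = 32 J\<close>, and its discriminant equals \<open>\<Delta>(F)\<close>.\<close>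
definition bq_jacobian :: "'a::field poly \<Rightarrow> 'a weierstrass" where
  "bq_jacobian F = (let a = bq_a F; b = bq_b F; c = bq_c F; d = bq_d F; e = bq_e F in
     (0, c, 0, b*d - 4*a*e, a*d^2 + b^2*e - 4*a*c*e))"

definition bq_level :: "('a::field \<Rightarrow> int) \<Rightarrow> 'a poly \<Rightarrow> int" where
  "bq_level v F = (v (bq_disc F) - min_disc_val v (bq_jacobian F)) div 12"

definition bq_minimal :: "('a::field \<Rightarrow> int) \<Rightarrow> 'a poly \<Rightarrow> bool" where
  "bq_minimal v F \<longleftrightarrow> binary_quartic F \<and> bq_integral v F \<and>
     (\<forall>G. binary_quartic G \<longrightarrow> bq_integral v G \<longrightarrow> bq_equiv F G \<longrightarrow>
          v (bq_disc F) \<le> v (bq_disc G))"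

definition bq_non_minimal :: "('a::field \<Rightarrow> int) \<Rightarrow> 'a poly \<Rightarrow> bool" where
  "bq_non_minimal v F \<longleftrightarrow> binary_quartic F \<and> bq_integral v F \<and> \<not> bq_minimal v F"

definition bq_F1 :: "('a::field \<Rightarrow> int) \<Rightarrow> 'a \<Rightarrow> 'a poly \<Rightarrow> 'a poly" where
  "bq_F1 v \<pi> F = smult (\<pi> powi (- bq_val v F)) F"

text \<open>One step: choose \<open>(m_ij) \<in> GL_2(O_K)\<close> such that after the substitution the
  repeated root of \<open>F_1 mod \<pi>\<close> sits at \<open>(0:1)\<close> (i.e. \<open>(0:1)\<close> is a root of
  multiplicity \<open>\<ge> 3\<close> of the transformed \<open>F_1 mod \<pi>\<close>), apply the substitution to \<open>F\<close>,
  then replace \<open>F(x,z)\<close> by \<open>\<pi>^(-2) F(\<pi> x, z)\<close>.\<close>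
definition bq_step :: "('a::field \<Rightarrow> int) \<Rightarrow> 'a \<Rightarrow> 'a poly \<Rightarrow> 'a poly \<Rightarrow> bool" where
  "bq_step v \<pi> F G \<longleftrightarrow> (\<exists>m11 m12 m21 m22. GL2_O v m11 m12 m21 m22 \<and>
     bq_root_mult_ge v (bq_subst (bq_F1 v \<pi> F) m11 m12 m21 m22) 0 1 3 \<and>
     G = smult (inverse (\<pi>^2)) (bq_subst (bq_subst F m11 m12 m21 m22) \<pi> 0 0 1))"

end

theory Submission
  imports Defs
begin


locale dvr =
  fixes v :: "'a::field \<Rightarrow> int" and \<pi> :: 'a
  assumes dv: "discrete_valuation v" and pi0: "\<pi> \<noteq> 0" and vpi: "v \<pi> = 1"
begin

lemma vmult: "x \<noteq> 0 \<Longrightarrow> y \<noteq> 0 \<Longrightarrow> v (x*y) = v x + v y"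
  using dv unfolding discrete_valuation_def by blast

lemma vadd: "x \<noteq> 0 \<Longrightarrow> y \<noteq> 0 \<Longrightarrow> x + y \<noteq> 0 \<Longrightarrow> min (v x) (v y) \<le> v (x+y)"
  using dv unfolding discrete_valuation_def by blast

lemma v1[simp]: "v 1 = 0"
  using vmult[of 1 1] by simp

lemma vinv: "x \<noteq> 0 \<Longrightarrow> v (inverse x) = - v x"
  using vmult[of x "inverse x"] by simp

lemma vm1[simp]: "v (-1) = 0"
  using vmult[of "-1" "-1"] by simp

lemma vneg[simp]: "v (-x) = v x"
proof (cases "x = 0")
  case False
  then show ?thesis using vmult[of "-1" x] by simp
qed simp

lemma vpow: "x \<noteq> 0 \<Longrightarrow> v (x^n) = int n * v x"
  by (induction n) (auto simp: vmult algebra_simps)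

lemma vdiv: "x \<noteq> 0 \<Longrightarrow> y \<noteq> 0 \<Longrightarrow> v (x/y) = v x - v y"
  by (simp add: divide_inverse vmult vinv)

lemma vpipow[simp]: "v (\<pi>^n) = int n"
  using vpow[OF pi0] vpi by simp

lemma vge_0[simp]: "vge v n 0" by (simp add: vge_def)

lemma vge_mono: "m \<le> n \<Longrightarrow> vge v n x \<Longrightarrow> vge v m x"
  by (auto simp: vge_def)

lemma vge_add: "vge v n x \<Longrightarrow> vge v n y \<Longrightarrow> vge v n (x+y)"
proof -
  assume a: "vge v n x" "vge v n y"
  show ?thesis
  proof (cases "x = 0 \<or> y = 0 \<or> x + y = 0")
    case True
    then show ?thesis using a by (auto simp: vge_def)
  next
    case False
    then have "min (v x) (v y) \<le> v (x+y)" using vadd by blast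
    moreover have "n \<le> v x" "n \<le> v y" using a False by (auto simp: vge_def)
    ultimately show ?thesis unfolding vge_def by linarith
  qed
qed

lemma vge_neg: "vge v n x \<Longrightarrow> vge v n (-x)"
  by (auto simp: vge_def)

lemma vge_neg_iff[simp]: "vge v n (-x) = vge v n x"
  by (auto simp: vge_def)

lemma vge_diff: "vge v n x \<Longrightarrow> vge v n y \<Longrightarrow> vge v n (x-y)"
  using vge_add[of n x "-y"] by simp

lemma vge_mult: "vge v n x \<Longrightarrow> vge v m y \<Longrightarrow> vge v (n+m) (x*y)"
  unfolding vge_def by (cases "x = 0 \<or> y = 0") (auto simp: vmult)

lemma vge_mult_O: "vge v n x \<Longrightarrow> in_O v y \<Longrightarrow> vge v n (x*y)"
  using vge_mult[of n x 0 y] by (simp add: in_O_def)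

lemma vge_mult_O': "in_O v y \<Longrightarrow> vge v n x \<Longrightarrow> vge v n (y*x)"
  using vge_mult_O[of n x y] by (simp add: mult.commute)

lemma vge_pow: "vge v n x \<Longrightarrow> vge v (int k * n) (x^k)"
proof (induction k)
  case 0 then show ?case by (simp add: vge_def)
next
  case (Suc k)
  then have "vge v (n + int k * n) (x * x^k)" using vge_mult by blast
  then show ?case by (simp add: algebra_simps)
qed

lemma vge_sum: "(\<And>i. i \<in> A \<Longrightarrow> vge v n (f i)) \<Longrightarrow> vge v n (sum f A)"
  by (induction A rule: infinite_finite_induct) (auto intro: vge_add)

lemma in_O_add: "in_O v x \<Longrightarrow> in_O v y \<Longrightarrow> in_O v (x+y)"
  unfolding in_O_def by (rule vge_add)
lemma in_O_diff: "in_O v x \<Longrightarrow> in_O v y \<Longrightarrow> in_O v (x-y)"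
  unfolding in_O_def by (rule vge_diff)
lemma in_O_mult: "in_O v x \<Longrightarrow> in_O v y \<Longrightarrow> in_O v (x*y)"
  unfolding in_O_def using vge_mult[of 0 x 0 y] by simp
lemma in_O_neg: "in_O v x \<Longrightarrow> in_O v (-x)"
  unfolding in_O_def by simp
lemma in_O_pow: "in_O v x \<Longrightarrow> in_O v (x^k)"
  using vge_pow[of 0 x k] by (simp add: in_O_def)
lemma in_O_1: "in_O v 1" by (simp add: in_O_def vge_def)
lemma in_O_0: "in_O v 0" by (simp add: in_O_def vge_def)
lemma in_O_of_nat: "in_O v (of_nat n)"
  by (induction n) (auto intro: in_O_add in_O_1 in_O_0)
lemma in_O_numeral: "in_O v (numeral n)"
  using in_O_of_nat[of "numeral n"] by simp
lemma in_O_pi: "in_O v \<pi>" by (simp add: in_O_def vge_def vpi)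
lemma in_O_vge: "0 \<le> n \<Longrightarrow> vge v n x \<Longrightarrow> in_O v x"
  unfolding in_O_def using vge_mono by blast

lemmas O_intros = in_O_add in_O_diff in_O_mult in_O_neg in_O_pow in_O_1 in_O_0 in_O_numeral in_O_pi

lemma vge_pi_pow: "vge v (int n) (\<pi>^n)" by (simp add: vge_def)
lemma vge_pi: "vge v 1 \<pi>" by (simp add: vge_def vpi)

lemma vge_times_pi_pow: "vge v (n + int k) (\<pi>^k * x) \<longleftrightarrow> vge v n x"
proof (cases "x = 0")
  case False
  have "\<pi>^k \<noteq> 0" using pi0 by simp
  then have "v (\<pi>^k * x) = int k + v x" using vmult[of "\<pi>^k" x] False by simp
  then show ?thesis using False \<open>\<pi>^k \<noteq> 0\<close> unfolding vge_def by auto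
qed (simp add: vge_def)

lemma vge_times_pi: "vge v (n + 1) (\<pi> * x) \<longleftrightarrow> vge v n x"
  using vge_times_pi_pow[of n 1 x] by simp

lemma unit_v0: "in_O v w \<Longrightarrow> \<not> vge v 1 w \<Longrightarrow> w \<noteq> 0 \<and> v w = 0"
  unfolding in_O_def vge_def by auto

lemma unit_inv: "in_O v w \<Longrightarrow> \<not> vge v 1 w \<Longrightarrow> in_O v (inverse w)"
proof -
  assume a: "in_O v w" "\<not> vge v 1 w"
  then have "w \<noteq> 0" "v w = 0" using unit_v0 by auto
  then show ?thesis by (simp add: in_O_def vge_def vinv)
qed

lemma unit_cancel: "in_O v w \<Longrightarrow> \<not> vge v 1 w \<Longrightarrow> vge v n (w*x) \<Longrightarrow> vge v n x"
proof -
  assume a: "in_O v w" "\<not> vge v 1 w" "vge v n (w*x)"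
  then have w: "w \<noteq> 0" "v w = 0" using unit_v0 by auto
  show ?thesis
  proof (cases "x = 0")
    case False
    then have "v (w*x) = v x" using vmult[of w x] w by simp
    then show ?thesis using a(3) w False unfolding vge_def by auto
  qed (simp add: vge_def)
qed

lemma unit_mult: "in_O v w \<Longrightarrow> \<not> vge v 1 w \<Longrightarrow> in_O v w' \<Longrightarrow> \<not> vge v 1 w' \<Longrightarrow> in_O v (w*w') \<and> \<not> vge v 1 (w*w')"
proof -
  assume a: "in_O v w" "\<not> vge v 1 w" "in_O v w'" "\<not> vge v 1 w'"
  then have "w \<noteq> 0" "v w = 0" "w' \<noteq> 0" "v w' = 0" using unit_v0 by auto
  then have "v (w*w') = 0" "w*w' \<noteq> 0" using vmult[of w w'] by auto
  then show ?thesis unfolding in_O_def vge_def by auto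
qed

lemma unit_pow: "in_O v w \<Longrightarrow> \<not> vge v 1 w \<Longrightarrow> in_O v (w^k) \<and> \<not> vge v 1 (w^k)"
proof -
  assume a: "in_O v w" "\<not> vge v 1 w"
  then have "w \<noteq> 0" "v w = 0" using unit_v0 by auto
  then have "v (w^k) = 0" "w^k \<noteq> 0" using vpow[of w k] by auto
  then show ?thesis unfolding in_O_def vge_def by auto
qed

lemma vge1_pow: "vge v 1 (x^k) \<Longrightarrow> k \<ge> 1 \<Longrightarrow> in_O v x \<Longrightarrow> vge v 1 x"
proof -
  assume a: "vge v 1 (x^k)" "k \<ge> 1" "in_O v x"
  show ?thesis
  proof (cases "x = 0")
    case False
    then have "x^k \<noteq> 0" by simp
    then have "1 \<le> int k * v x" using a(1) vpow[OF False, of k] False by (simp add: vge_def)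
    moreover have "0 \<le> v x" using a(3) False by (simp add: in_O_def vge_def)
    ultimately have "1 \<le> v x"
      by (cases "v x = 0") auto
    then show ?thesis by (simp add: vge_def)
  qed (simp add: vge_def)
qed

end


type_synonym 'a mat2 = "'a \<times> 'a \<times> 'a \<times> 'a"

fun sb :: "'a::field poly \<Rightarrow> 'a mat2 \<Rightarrow> 'a poly" where
  "sb F (A,B,C,D) = bq_subst F A C B D"

fun mmul :: "'a::field mat2 \<Rightarrow> 'a mat2 \<Rightarrow> 'a mat2" where
  "mmul (A,B,C,D) (A',B',C',D') = (A*A' + B*C', A*B' + B*D', C*A' + D*C', C*B' + D*D')"

fun mdet :: "'a::field mat2 \<Rightarrow> 'a" where
  "mdet (A,B,C,D) = A*D - B*C"

definition qpoly :: "'a::field \<Rightarrow> 'a \<Rightarrow> 'a \<Rightarrow> 'a \<Rightarrow> 'a \<Rightarrow> 'a poly" where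
  "qpoly e d c b a = [:e, d, c, b, a:]"

lemma coeff_qpoly: "coeff (qpoly e d c b a) 0 = e" "coeff (qpoly e d c b a) 1 = d"
  "coeff (qpoly e d c b a) 2 = c" "coeff (qpoly e d c b a) 3 = b" "coeff (qpoly e d c b a) 4 = a"
  "i > 4 \<Longrightarrow> coeff (qpoly e d c b a) i = 0"
  by (auto simp: qpoly_def coeff_pCons numeral_eq_Suc split: nat.splits)

lemma degree_qpoly: "degree (qpoly e d c b a) \<le> 4"
  by (rule degree_le) (simp add: coeff_qpoly)

lemma qpoly_eq: "degree F \<le> 4 \<Longrightarrow> F = qpoly (coeff F 0) (coeff F 1) (coeff F 2) (coeff F 3) (coeff F 4)"
proof (rule poly_eqI)
  fix n assume "degree F \<le> 4"
  show "coeff F n = coeff (qpoly (coeff F 0) (coeff F 1) (coeff F 2) (coeff F 3) (coeff F 4)) n"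
  proof (cases "n > 4")
    case True then show ?thesis using \<open>degree F \<le> 4\<close> by (simp add: coeff_qpoly coeff_eq_0)
  next
    case False then have "n = 0 \<or> n = 1 \<or> n = 2 \<or> n = 3 \<or> n = 4" by auto
    then show ?thesis using coeff_qpoly(1-5)[of "coeff F 0" "coeff F 1" "coeff F 2" "coeff F 3" "coeff F 4"]
      by (elim disjE) simp_all
  qed
qed

definition S0 where "S0 e d c b a A B C D = e*D^4 + d*B*D^3 + c*B^2*D^2 + b*B^3*D + a*B^4"
definition S1 where "S1 e d c b a A B C D = e*4*C*D^3 + d*(A*D^3 + 3*B*C*D^2) + c*(2*A*B*D^2 + 2*B^2*C*D) + b*(3*A*B^2*D + B^3*C) + a*4*A*B^3"
definition S2 where "S2 e d c b a A B C D = e*6*C^2*D^2 + d*(3*A*C*D^2 + 3*B*C^2*D) + c*(A^2*D^2 + 4*A*B*C*D + B^2*C^2) + b*(3*A^2*B*D + 3*A*B^2*C) + a*6*A^2*B^2"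
definition S3 where "S3 e d c b a A B C D = e*4*C^3*D + d*(3*A*C^2*D + B*C^3) + c*(2*A^2*C*D + 2*A*B*C^2) + b*(A^3*D + 3*A^2*B*C) + a*4*A^3*B"
definition S4 where "S4 e d c b a A B C D = e*C^4 + d*A*C^3 + c*A^2*C^2 + b*A^3*C + a*A^4"

lemma sb_explicit:
  fixes F :: "'a::field poly"
  shows "sb F (A,B,C,D) = qpoly
     (S0 (coeff F 0) (coeff F 1) (coeff F 2) (coeff F 3) (coeff F 4) A B C D)
     (S1 (coeff F 0) (coeff F 1) (coeff F 2) (coeff F 3) (coeff F 4) A B C D)
     (S2 (coeff F 0) (coeff F 1) (coeff F 2) (coeff F 3) (coeff F 4) A B C D)
     (S3 (coeff F 0) (coeff F 1) (coeff F 2) (coeff F 3) (coeff F 4) A B C D)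
     (S4 (coeff F 0) (coeff F 1) (coeff F 2) (coeff F 3) (coeff F 4) A B C D)"
  unfolding sb.simps bq_subst_def qpoly_def S0_def S1_def S2_def S3_def S4_def
  by (simp add: atMost_Suc numeral_eq_Suc algebra_simps power2_eq_square power3_eq_cube)

lemma sb_qpoly: "sb (qpoly e d c b a) (A,B,C,D) = qpoly (S0 e d c b a A B C D) (S1 e d c b a A B C D)
   (S2 e d c b a A B C D) (S3 e d c b a A B C D) (S4 e d c b a A B C D)"
  by (simp only: sb_explicit coeff_qpoly)

lemma sb_comp: "sb (sb F S) T = sb F (mmul S T)"
proof -
  obtain A B C D where S: "S = (A,B,C,D)" by (cases S) auto
  obtain A' B' C' D' where T: "T = (A',B',C',D')" by (cases T) auto
  show ?thesis unfolding S T mmul.simps sb_explicit[of F] sb_qpoly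
    unfolding qpoly_def S0_def S1_def S2_def S3_def S4_def
    by (simp only: pCons_eq_iff) algebra
qed


lemma coeff_sb:
  "coeff (sb F (A,B,C,D)) 0 = S0 (coeff F 0) (coeff F 1) (coeff F 2) (coeff F 3) (coeff F 4) A B C D"
  "coeff (sb F (A,B,C,D)) 1 = S1 (coeff F 0) (coeff F 1) (coeff F 2) (coeff F 3) (coeff F 4) A B C D"
  "coeff (sb F (A,B,C,D)) 2 = S2 (coeff F 0) (coeff F 1) (coeff F 2) (coeff F 3) (coeff F 4) A B C D"
  "coeff (sb F (A,B,C,D)) 3 = S3 (coeff F 0) (coeff F 1) (coeff F 2) (coeff F 3) (coeff F 4) A B C D"
  "coeff (sb F (A,B,C,D)) 4 = S4 (coeff F 0) (coeff F 1) (coeff F 2) (coeff F 3) (coeff F 4) A B C D"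
  "i > 4 \<Longrightarrow> coeff (sb F (A,B,C,D)) i = 0"
  by (simp_all only: sb_explicit coeff_qpoly)

lemma degree_sb: "degree (sb F S) \<le> 4"
  by (cases S) (simp only: sb_explicit degree_qpoly)

lemma sb_id: "degree F \<le> 4 \<Longrightarrow> sb F (1,0,0,1) = F"
  apply (subst (2) qpoly_eq, assumption)
  apply (simp only: sb_explicit)
  apply (simp add: S0_def S1_def S2_def S3_def S4_def)
  done

lemma qpoly_diff: "qpoly e d c b a - qpoly e' d' c' b' a' = qpoly (e-e') (d-d') (c-c') (b-b') (a-a')"
  by (simp add: qpoly_def)
lemma qpoly_add: "qpoly e d c b a + qpoly e' d' c' b' a' = qpoly (e+e') (d+d') (c+c') (b+b') (a+a')"
  by (simp add: qpoly_def)
lemma qpoly_smult: "smult k (qpoly e d c b a) = qpoly (k*e) (k*d) (k*c) (k*b) (k*a)"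
  by (simp add: qpoly_def)

lemma sb_diff: "sb (F - G) S = sb F S - sb G S"
  by (cases S) (simp only: sb_explicit qpoly_diff coeff_diff, simp add: S0_def S1_def S2_def S3_def S4_def algebra_simps)

lemma sb_add: "sb (F + G) S = sb F S + sb G S"
  by (cases S) (simp only: sb_explicit qpoly_add coeff_add, simp add: S0_def S1_def S2_def S3_def S4_def algebra_simps)

lemma sb_smult: "sb (smult k F) S = smult k (sb F S)"
  by (cases S) (simp only: sb_explicit qpoly_smult coeff_smult, simp add: S0_def S1_def S2_def S3_def S4_def algebra_simps)

lemma mmul_assoc: "mmul (mmul S T) R = mmul S (mmul T R)"
  by (cases S; cases T; cases R) (simp add: algebra_simps)

lemma mdet_mmul: "mdet (mmul S T) = mdet S * mdet T"
  by (cases S; cases T) (simp add: algebra_simps)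

fun minv :: "'a::field mat2 \<Rightarrow> 'a mat2" where
  "minv (A,B,C,D) = (D / (A*D - B*C), - B / (A*D - B*C), - C / (A*D - B*C), A / (A*D - B*C))"

lemma minv_expl: "mdet S \<noteq> 0 \<Longrightarrow> \<exists>A B C D d. S = (A,B,C,D) \<and> d = A*D - B*C \<and> d \<noteq> 0 \<and> minv S = (D/d, -B/d, -C/d, A/d)"
  by (cases S) auto

lemma minv_r: "mdet S \<noteq> 0 \<Longrightarrow> mmul S (minv S) = (1,0,0,1)"
proof -
  assume "mdet S \<noteq> 0"
  then obtain A B C D d where e: "S = (A,B,C,D)" "d = A*D - B*C" "d \<noteq> 0" "minv S = (D/d, -B/d, -C/d, A/d)"
    using minv_expl by blast
  have "A*(D/d) + B*(-C/d) = (A*D - B*C)/d" "C*(D/d) + D*(-C/d) = 0" "A*(-B/d) + B*(A/d) = 0"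
       "C*(-B/d) + D*(A/d) = (A*D - B*C)/d"
    using e(3) by (simp_all add: field_simps)
  then show ?thesis using e by simp
qed

lemma minv_l: "mdet S \<noteq> 0 \<Longrightarrow> mmul (minv S) S = (1,0,0,1)"
proof -
  assume "mdet S \<noteq> 0"
  then obtain A B C D d where e: "S = (A,B,C,D)" "d = A*D - B*C" "d \<noteq> 0" "minv S = (D/d, -B/d, -C/d, A/d)"
    using minv_expl by blast
  have "D/d*A + (-B/d)*C = (A*D - B*C)/d" "D/d*B + (-B/d)*D = 0" "(-C/d)*A + A/d*C = 0"
       "(-C/d)*B + A/d*D = (A*D - B*C)/d"
    using e(3) by (simp_all add: field_simps)
  then show ?thesis using e by simp
qed

lemma mdet_minv: "mdet S \<noteq> 0 \<Longrightarrow> mdet (minv S) = inverse (mdet S)"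
proof -
  assume "mdet S \<noteq> 0"
  then obtain A B C D d where e: "S = (A,B,C,D)" "d = A*D - B*C" "d \<noteq> 0" "minv S = (D/d, -B/d, -C/d, A/d)"
    using minv_expl by blast
  have "D/d*(A/d) - (-B/d)*(-C/d) = (A*D - B*C)/(d*d)" using e(3) by (simp add: field_simps)
  also have "\<dots> = inverse d" using e(3) by (simp add: field_simps) (simp add: e(2) algebra_simps)
  finally show ?thesis using e by simp
qed

lemma sb_inv: "degree F \<le> 4 \<Longrightarrow> mdet S \<noteq> 0 \<Longrightarrow> sb (sb F S) (minv S) = F"
proof -
  assume a: "degree F \<le> 4" "mdet S \<noteq> 0"
  have "sb (sb F S) (minv S) = sb F (mmul S (minv S))" by (rule sb_comp)
  also have "\<dots> = sb F (1,0,0,1)" using minv_r[OF a(2)] by simp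
  also have "\<dots> = F" using sb_id[OF a(1)] .
  finally show ?thesis .
qed

lemma sb_inv': "degree F \<le> 4 \<Longrightarrow> mdet S \<noteq> 0 \<Longrightarrow> sb (sb F (minv S)) S = F"
proof -
  assume a: "degree F \<le> 4" "mdet S \<noteq> 0"
  have "sb (sb F (minv S)) S = sb F (mmul (minv S) S)" by (rule sb_comp)
  also have "\<dots> = sb F (1,0,0,1)" using minv_l[OF a(2)] by simp
  also have "\<dots> = F" using sb_id[OF a(1)] .
  finally show ?thesis .
qed

context dvr
begin

fun GL2O :: "'a mat2 \<Rightarrow> bool" where
  "GL2O (A,B,C,D) \<longleftrightarrow> in_O v A \<and> in_O v B \<and> in_O v C \<and> in_O v D \<and> \<not> vge v 1 (A*D - B*C)"

lemma GL2O_iff: "GL2_O v m11 m12 m21 m22 \<longleftrightarrow> GL2O (m11, m21, m12, m22)"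
proof
  assume "GL2_O v m11 m12 m21 m22"
  then show "GL2O (m11, m21, m12, m22)" by (auto simp: GL2_O_def vge_def mult.commute)
next
  assume a: "GL2O (m11, m21, m12, m22)"
  then have "in_O v (m11 * m22 - m21 * m12)" by (auto intro!: O_intros)
  then have "m11 * m22 - m21 * m12 \<noteq> 0 \<and> v (m11 * m22 - m21 * m12) = 0" using a unit_v0 by auto
  then show "GL2_O v m11 m12 m21 m22" using a by (auto simp: GL2_O_def mult.commute)
qed

lemma GL2O_det: "GL2O S \<Longrightarrow> in_O v (mdet S) \<and> \<not> vge v 1 (mdet S)"
  by (cases S) (auto intro!: O_intros)

lemma GL2O_det0: "GL2O S \<Longrightarrow> mdet S \<noteq> 0"
  using GL2O_det by (auto simp: vge_def)

lemma GL2O_minv: "GL2O S \<Longrightarrow> GL2O (minv S)"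
proof -
  assume g: "GL2O S"
  have d0: "mdet S \<noteq> 0" using g GL2O_det0 by blast
  then obtain A B C D d where e: "S = (A,B,C,D)" "d = A*D - B*C" "d \<noteq> 0" "minv S = (D/d, -B/d, -C/d, A/d)"
    using minv_expl by blast
  have u: "in_O v d" "\<not> vge v 1 d" using g e GL2O_det by auto
  then have ui: "in_O v (inverse d)" using unit_inv by blast
  have ent: "in_O v A" "in_O v B" "in_O v C" "in_O v D" using g e by auto
  have "mdet (minv S) = inverse d" using mdet_minv[OF d0] e by simp
  then have dm: "D/d*(A/d) - (-B/d)*(-C/d) = inverse d" using e by simp
  have "\<not> vge v 1 (inverse d)"
    using unit_v0[OF u] by (auto simp: vge_def vinv)
  then show ?thesis unfolding e(4) GL2O.simps dm using ent ui
    by (simp add: divide_inverse O_intros)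
qed

lemma GL2O_mmul: "GL2O S \<Longrightarrow> GL2O T \<Longrightarrow> GL2O (mmul S T)"
proof -
  assume g: "GL2O S" "GL2O T"
  obtain A B C D where S: "S = (A,B,C,D)" by (cases S) auto
  obtain A' B' C' D' where T: "T = (A',B',C',D')" by (cases T) auto
  have "in_O v (mdet S) \<and> \<not> vge v 1 (mdet S)" "in_O v (mdet T) \<and> \<not> vge v 1 (mdet T)"
    using g GL2O_det by auto
  then have "\<not> vge v 1 (mdet (mmul S T))" using unit_mult mdet_mmul by metis
  then have dd: "\<not> vge v 1 ((A*A' + B*C') * (C*B' + D*D') - (A*B' + B*D') * (C*A' + D*C'))"
    using S T by simp
  show ?thesis unfolding S T mmul.simps GL2O.simps using g S T dd by (auto intro!: O_intros)
qed

definition vgeP :: "int \<Rightarrow> 'a poly \<Rightarrow> bool" where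
  "vgeP n F \<longleftrightarrow> (\<forall>i. vge v n (coeff F i))"

lemma vgeP_qpoly: "vgeP n (qpoly e d c b a) \<longleftrightarrow> vge v n e \<and> vge v n d \<and> vge v n c \<and> vge v n b \<and> vge v n a"
proof
  assume "vgeP n (qpoly e d c b a)" then show "vge v n e \<and> vge v n d \<and> vge v n c \<and> vge v n b \<and> vge v n a"
    unfolding vgeP_def using coeff_qpoly(1-5)[of e d c b a] by metis
next
  assume a: "vge v n e \<and> vge v n d \<and> vge v n c \<and> vge v n b \<and> vge v n a"
  show "vgeP n (qpoly e d c b a)" unfolding vgeP_def
  proof
    fix i
    show "vge v n (coeff (qpoly e d c b a) i)"
    proof (cases "i > 4")
      case True then show ?thesis by (simp add: coeff_qpoly)
    next
      case False then have "i = 0 \<or> i = 1 \<or> i = 2 \<or> i = 3 \<or> i = 4" by auto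
      then show ?thesis using a coeff_qpoly(1-5)[of e d c b a] by (elim disjE) simp_all
    qed
  qed
qed

lemma vgeP_coeffs: "vgeP n F \<Longrightarrow> vge v n (coeff F i)" by (simp add: vgeP_def)

lemmas vge_intros = vge_add vge_diff vge_mult_O vge_mult_O' vge_neg

lemma vgeP_sb: "vgeP n F \<Longrightarrow> in_O v A \<Longrightarrow> in_O v B \<Longrightarrow> in_O v C \<Longrightarrow> in_O v D \<Longrightarrow> vgeP n (sb F (A,B,C,D))"
  unfolding sb_explicit vgeP_qpoly S0_def S1_def S2_def S3_def S4_def
  by (intro conjI vge_intros O_intros vgeP_coeffs | assumption)+

lemma vgeP_sb_GL2O: "GL2O S \<Longrightarrow> vgeP n F \<Longrightarrow> vgeP n (sb F S)"
proof -
  assume a: "GL2O S" "vgeP n F"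
  obtain A B C D where S: "S = (A,B,C,D)" by (cases S) auto
  show ?thesis using a S vgeP_sb[of n F A B C D] by simp
qed

lemma vgeP_sb_iff: "GL2O S \<Longrightarrow> degree F \<le> 4 \<Longrightarrow> vgeP n (sb F S) \<longleftrightarrow> vgeP n F"
  using vgeP_sb_GL2O[of S] vgeP_sb_GL2O[of "minv S"] GL2O_minv sb_inv GL2O_det0 by metis

lemma bq_integral_vgeP: "bq_integral v F \<longleftrightarrow> vgeP 0 F"
  by (simp add: bq_integral_def in_O_def vgeP_def)

end


fun wiso :: "'a::field \<Rightarrow> 'a \<Rightarrow> 'a \<Rightarrow> 'a \<Rightarrow> 'a weierstrass \<Rightarrow> 'a weierstrass \<Rightarrow> bool" where
  "wiso u r s t (a1, a2, a3, a4, a6) (a1', a2', a3', a4', a6') \<longleftrightarrow>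
        u * a1' = a1 + 2*s \<and>
        u^2 * a2' = a2 - s*a1 + 3*r - s^2 \<and>
        u^3 * a3' = a3 + r*a1 + 2*t \<and>
        u^4 * a4' = a4 - s*a3 + 2*r*a2 - (t + r*s)*a1 + 3*r^2 - 2*s*t \<and>
        u^6 * a6' = a6 + r*a4 + r^2*a2 + r^3 - t*a3 - t^2 - r*t*a1"

lemma w_iso_iff: "w_iso W W' \<longleftrightarrow> (\<exists>u r s t. u \<noteq> 0 \<and> wiso u r s t W W')"
  by (cases W; cases W') (simp add: w_iso_def)

lemma wiso_trans:
  assumes "wiso u1 r1 s1 t1 W1 W2" "wiso u2 r2 s2 t2 W2 W3"
  shows "wiso (u1*u2) (r1 + u1^2*r2) (s1 + u1*s2) (t1 + u1^2*s1*r2 + u1^3*t2) W1 W3"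
proof -
  obtain a1 a2 a3 a4 a6 where 1: "W1 = (a1,a2,a3,a4,a6)" by (cases W1) auto
  obtain b1 b2 b3 b4 b6 where 2: "W2 = (b1,b2,b3,b4,b6)" by (cases W2) auto
  obtain c1 c2 c3 c4 c6 where 3: "W3 = (c1,c2,c3,c4,c6)" by (cases W3) auto
  have h1: "u1 * b1 = a1 + 2*s1" "u1^2 * b2 = a2 - s1*a1 + 3*r1 - s1^2" "u1^3 * b3 = a3 + r1*a1 + 2*t1"
    "u1^4 * b4 = a4 - s1*a3 + 2*r1*a2 - (t1 + r1*s1)*a1 + 3*r1^2 - 2*s1*t1"
    "u1^6 * b6 = a6 + r1*a4 + r1^2*a2 + r1^3 - t1*a3 - t1^2 - r1*t1*a1"
    using assms(1) 1 2 by simp_all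
  have h2: "u2 * c1 = b1 + 2*s2" "u2^2 * c2 = b2 - s2*b1 + 3*r2 - s2^2" "u2^3 * c3 = b3 + r2*b1 + 2*t2"
    "u2^4 * c4 = b4 - s2*b3 + 2*r2*b2 - (t2 + r2*s2)*b1 + 3*r2^2 - 2*s2*t2"
    "u2^6 * c6 = b6 + r2*b4 + r2^2*b2 + r2^3 - t2*b3 - t2^2 - r2*t2*b1"
    using assms(2) 2 3 by simp_all
  show ?thesis unfolding 1 3 wiso.simps
    apply (intro conjI)
    using h1 h2 by algebra+
qed

lemma wiso_sym:
  assumes "wiso u r s t W1 W2" "u \<noteq> 0"
  shows "wiso (inverse u) (- r / u^2) (- s / u) ((r*s - t) / u^3) W2 W1"
proof -
  obtain a1 a2 a3 a4 a6 where 1: "W1 = (a1,a2,a3,a4,a6)" by (cases W1) auto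
  obtain b1 b2 b3 b4 b6 where 2: "W2 = (b1,b2,b3,b4,b6)" by (cases W2) auto
  define ui where "ui = inverse u"
  have ui: "u * ui = 1" using assms(2) ui_def by simp
  have e: "- r / u^2 = - r * ui^2" "- s / u = - s * ui" "(r*s - t) / u^3 = (r*s-t)*ui^3"
    using ui_def by (simp_all add: divide_inverse power_inverse)
  have h1: "a1 = u * b1 - 2*s" "a2 = u^2 * b2 + s*a1 - 3*r + s^2" "a3 = u^3 * b3 - r*a1 - 2*t"
    "a4 = u^4 * b4 + s*a3 - 2*r*a2 + (t + r*s)*a1 - 3*r^2 + 2*s*t"
    "a6 = u^6 * b6 - r*a4 - r^2*a2 - r^3 + t*a3 + t^2 + r*t*a1"
    using assms(1) 1 2 by (simp_all add: algebra_simps)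
  show ?thesis unfolding 1 2 wiso.simps e ui_def[symmetric]
    unfolding h1(5) h1(4) h1(3) h1(2) h1(1)
    apply (intro conjI)
    using ui by algebra+
qed

lemma wiso_refl: "wiso 1 0 0 0 W W"
  by (cases W) simp


lemma wiso_disc:
  assumes "wiso u r s t W W'"
  shows "w_disc W = u^12 * w_disc W'"
proof -
  obtain a1 a2 a3 a4 a6 where 1: "W = (a1,a2,a3,a4,a6)" by (cases W) auto
  obtain b1 b2 b3 b4 b6 where 2: "W' = (b1,b2,b3,b4,b6)" by (cases W') auto
  have h1: "a1 = u * b1 - 2*s" "a2 = u^2 * b2 + s*a1 - 3*r + s^2" "a3 = u^3 * b3 - r*a1 - 2*t"
    "a4 = u^4 * b4 + s*a3 - 2*r*a2 + (t + r*s)*a1 - 3*r^2 + 2*s*t"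
    "a6 = u^6 * b6 - r*a4 - r^2*a2 - r^3 + t*a3 + t^2 + r*t*a1"
    using assms 1 2 by (simp_all add: algebra_simps)
  define x2 where "x2 = a1^2 + 4*a2"
  define x4 where "x4 = 2*a4 + a1*a3"
  define x6 where "x6 = a3^2 + 4*a6"
  define x8 where "x8 = a1^2*a6 + 4*a2*a6 - a1*a3*a4 + a2*a3^2 - a4^2"
  define y2 where "y2 = b1^2 + 4*b2"
  define y4 where "y4 = 2*b4 + b1*b3"
  define y6 where "y6 = b3^2 + 4*b6"
  define y8 where "y8 = b1^2*b6 + 4*b2*b6 - b1*b3*b4 + b2*b3^2 - b4^2"
  have r2: "u^2 * y2 = x2 + 12*r" unfolding x2_def y2_def using h1 by algebra
  have r4: "u^4 * y4 = x4 + r*x2 + 6*r^2" unfolding x2_def x4_def y4_def using h1 by algebra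
  have r6: "u^6 * y6 = x6 + 2*r*x4 + r^2*x2 + 4*r^3" unfolding x2_def x4_def x6_def y6_def using h1 by algebra
  have r8: "u^8 * y8 = x8 + 3*r*x6 + 3*r^2*x4 + r^3*x2 + 3*r^4"
    unfolding x2_def x4_def x6_def x8_def y8_def using h1 by algebra
  have q: "4*x8 = x2*x6 - x4^2" unfolding x2_def x4_def x6_def x8_def by algebra
  have "- (x2^2*x8) - 8*x4^3 - 27*x6^2 + 9*x2*x4*x6 = u^12 * (- (y2^2*y8) - 8*y4^3 - 27*y6^2 + 9*y2*y4*y6)"
    using r2 r4 r6 r8 q by algebra
  moreover have "w_disc W = - (x2^2*x8) - 8*x4^3 - 27*x6^2 + 9*x2*x4*x6"
    unfolding 1 w_disc_def Let_def x2_def x4_def x6_def x8_def by (simp only: prod.case)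
  moreover have "w_disc W' = - (y2^2*y8) - 8*y4^3 - 27*y6^2 + 9*y2*y4*y6"
    unfolding 2 w_disc_def Let_def y2_def y4_def y6_def y8_def by (simp only: prod.case)
  ultimately show ?thesis by simp
qed

lemma min_disc_val_eq:
  assumes "w_iso W W'"
  shows "min_disc_val v W = min_disc_val v W'"
proof -
  obtain u r s t where a: "u \<noteq> 0" "wiso u r s t W W'" using assms w_iso_iff by blast
  have sy: "wiso (inverse u) (- r / u^2) (- s / u) ((r*s - t) / u^3) W' W" using wiso_sym a by blast
  have eq: "w_iso W W'' = w_iso W' W''" for W''
  proof
    assume "w_iso W W''"
    then obtain u2 r2 s2 t2 where b: "u2 \<noteq> 0" "wiso u2 r2 s2 t2 W W''" using w_iso_iff by blast
    have "inverse u * u2 \<noteq> 0" using a b by simp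
    then show "w_iso W' W''" unfolding w_iso_iff using wiso_trans[OF sy b(2)] by blast
  next
    assume "w_iso W' W''"
    then obtain u2 r2 s2 t2 where b: "u2 \<noteq> 0" "wiso u2 r2 s2 t2 W' W''" using w_iso_iff by blast
    have "u * u2 \<noteq> 0" using a b by simp
    then show "w_iso W W''" unfolding w_iso_iff using wiso_trans[OF a(2) b(2)] by blast
  qed
  show ?thesis unfolding min_disc_val_def by (simp only: eq)
qed

lemma bq_disc_jac: "bq_disc F = w_disc (bq_jacobian F)"
  unfolding bq_disc_def w_disc_def bq_jacobian_def Let_def by simp algebra

abbreviation jac where "jac F \<equiv> bq_jacobian F"

definition goodm :: "'a::field mat2 \<Rightarrow> bool" where
  "goodm S \<longleftrightarrow> mdet S \<noteq> 0 \<and> (\<forall>F. \<exists>r s t. wiso (inverse (mdet S)) r s t (jac F) (jac (sb F S)))"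

lemma jac_qpoly: "jac F = (0, coeff F 2, 0, coeff F 3 * coeff F 1 - 4 * coeff F 4 * coeff F 0,
   coeff F 4 * (coeff F 1)^2 + (coeff F 3)^2 * coeff F 0 - 4 * coeff F 4 * coeff F 2 * coeff F 0)"
  by (simp add: bq_jacobian_def bq_a_def bq_b_def bq_c_def bq_d_def bq_e_def Let_def)

lemma good_shear_x: "goodm (1,t,0,1)"
  unfolding goodm_def
proof (intro conjI allI)
  fix F :: "'a poly"
  show "\<exists>r s t'. wiso (inverse (mdet (1,t,0,1))) r s t' (jac F) (jac (sb F (1,t,0,1)))"
    apply (rule exI[of _ "coeff F 3 * t + 2 * coeff F 4 * t^2"], rule exI[of _ 0], rule exI[of _ 0])
    unfolding jac_qpoly coeff_sb S0_def S1_def S2_def S3_def S4_def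
    by (simp; intro conjI; algebra)
qed simp

lemma good_shear_z: "goodm (1,0,t,1)"
  unfolding goodm_def
proof (intro conjI allI)
  fix F :: "'a poly"
  show "\<exists>r s t'. wiso (inverse (mdet (1,0,t,1))) r s t' (jac F) (jac (sb F (1,0,t,1)))"
    apply (rule exI[of _ "coeff F 1 * t + 2 * coeff F 0 * t^2"], rule exI[of _ 0], rule exI[of _ 0])
    unfolding jac_qpoly coeff_sb S0_def S1_def S2_def S3_def S4_def
    by (simp; intro conjI; algebra)
qed simp

lemma good_diag: assumes a: "\<alpha> \<noteq> 0" "\<delta> \<noteq> 0" shows "goodm (\<alpha>,0,0,\<delta>)"
  unfolding goodm_def
proof (intro conjI allI)
  fix F :: "'a poly"
  define ui where "ui = inverse (\<alpha> * \<delta>)"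
  have ui: "\<alpha> * \<delta> * ui = 1" using a ui_def by (simp add: field_simps)
  have md: "mdet (\<alpha>,0,0,\<delta>) = \<alpha> * \<delta>" by simp
  show "\<exists>r s t'. wiso (inverse (mdet (\<alpha>,0,0,\<delta>))) r s t' (jac F) (jac (sb F (\<alpha>,0,0,\<delta>)))"
    apply (rule exI[of _ 0], rule exI[of _ 0], rule exI[of _ 0])
    unfolding jac_qpoly coeff_sb md ui_def[symmetric] wiso.simps
    unfolding S0_def S1_def S2_def S3_def S4_def
    apply (intro conjI)
    apply (simp_all add: power_zero_numeral)
    using ui by algebra+
qed (use a in simp)


lemma good_mmul: assumes "goodm S" "goodm T" shows "goodm (mmul S T)"
  unfolding goodm_def
proof (intro conjI allI)
  show "mdet (mmul S T) \<noteq> 0" using assms by (simp add: goodm_def mdet_mmul del: mdet.simps)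
  fix F :: "'a poly"
  obtain r1 s1 t1 where 1: "wiso (inverse (mdet S)) r1 s1 t1 (jac F) (jac (sb F S))"
    using assms(1) goodm_def by blast
  obtain r2 s2 t2 where 2: "wiso (inverse (mdet T)) r2 s2 t2 (jac (sb F S)) (jac (sb (sb F S) T))"
    using assms(2) goodm_def by blast
  have e: "inverse (mdet S) * inverse (mdet T) = inverse (mdet (mmul S T))"
    by (simp add: mdet_mmul del: mdet.simps)
  show "\<exists>r s t. wiso (inverse (mdet (mmul S T))) r s t (jac F) (jac (sb F (mmul S T)))"
    using wiso_trans[OF 1 2] unfolding e sb_comp by blast
qed

lemma good_all: assumes "mdet S \<noteq> 0" shows "goodm S"
proof -
  obtain A B C D where S: "S = (A,B,C,D)" by (cases S) auto
  have gen: "goodm (A,B,C,D)" if "A \<noteq> 0" "A*D - B*C \<noteq> 0" for A B C D :: 'a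
  proof -
    have e: "C * B / A + (A * D - B * C) / A = D" using that(1) by (simp add: field_simps)
    have "(A,B,C,D) = mmul (mmul (1,0,C/A,1) (A,0,0,(A*D - B*C)/A)) (1,B/A,0,1)"
      using that(1) e by simp
    moreover have "goodm (mmul (mmul (1,0,C/A,1) (A,0,0,(A*D - B*C)/A)) (1,B/A,0,1))"
      using that by (intro good_mmul good_diag good_shear_x good_shear_z) auto
    ultimately show ?thesis by metis
  qed
  show ?thesis
  proof (cases "A = 0")
    case False then show ?thesis using gen assms S by simp
  next
    case True
    then have "C \<noteq> 0" "B \<noteq> 0" using assms S by auto
    have "S = mmul (1,1,0,1) (-C, B - D, C, D)" using S True by simp
    moreover have "goodm (-C, B - D, C, D)" using gen[where A="-C" and B="B-D" and C=C and D=D] \<open>C \<noteq> 0\<close> \<open>B \<noteq> 0\<close> by (simp add: algebra_simps)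
    ultimately show ?thesis using good_mmul good_shear_x by metis
  qed
qed

lemma jac_scale: "\<mu> \<noteq> 0 \<Longrightarrow> wiso (inverse \<mu>) 0 0 0 (jac F) (jac (smult (\<mu>^2) F))"
proof -
  assume m: "\<mu> \<noteq> 0"
  define ui where "ui = inverse \<mu>"
  have ui: "\<mu> * ui = 1" using m ui_def by simp
  show ?thesis unfolding jac_qpoly coeff_smult ui_def[symmetric] wiso.simps
    apply (intro conjI)
    apply (simp_all add: power_zero_numeral)
    using ui by algebra+
qed

lemma equiv_wiso:
  assumes "\<mu> \<noteq> 0" "mdet S \<noteq> 0"
  shows "\<exists>r s t. wiso (inverse (\<mu> * mdet S)) r s t (jac F) (jac (smult (\<mu>^2) (sb F S)))"
proof -
  obtain r1 s1 t1 where 1: "wiso (inverse (mdet S)) r1 s1 t1 (jac F) (jac (sb F S))"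
    using good_all[OF assms(2)] goodm_def by blast
  have 2: "wiso (inverse \<mu>) 0 0 0 (jac (sb F S)) (jac (smult (\<mu>^2) (sb F S)))"
    using jac_scale[OF assms(1)] .
  have e: "inverse (mdet S) * inverse \<mu> = inverse (\<mu> * mdet S)" by (simp add: mult.commute)
  show ?thesis using wiso_trans[OF 1 2] unfolding e by blast
qed

lemma equiv_disc:
  assumes "\<mu> \<noteq> 0" "mdet S \<noteq> 0"
  shows "bq_disc (smult (\<mu>^2) (sb F S)) = (\<mu> * mdet S)^12 * bq_disc F"
proof -
  obtain r s t where w: "wiso (inverse (\<mu> * mdet S)) r s t (jac F) (jac (smult (\<mu>^2) (sb F S)))"
    using equiv_wiso[OF assms] by blast
  have "bq_disc F = (inverse (\<mu> * mdet S))^12 * bq_disc (smult (\<mu>^2) (sb F S))"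
    unfolding bq_disc_jac using wiso_disc[OF w] .
  then show ?thesis using assms by (simp add: field_simps power_inverse)
qed

lemma equiv_min:
  assumes "\<mu> \<noteq> 0" "mdet S \<noteq> 0"
  shows "min_disc_val v (jac (smult (\<mu>^2) (sb F S))) = min_disc_val v (jac F)"
proof -
  obtain r s t where w: "wiso (inverse (\<mu> * mdet S)) r s t (jac F) (jac (smult (\<mu>^2) (sb F S)))"
    using equiv_wiso[OF assms] by blast
  moreover have "inverse (\<mu> * mdet S) \<noteq> 0" using assms by simp
  ultimately have "w_iso (jac F) (jac (smult (\<mu>^2) (sb F S)))" unfolding w_iso_iff by blast
  then show ?thesis using min_disc_val_eq by metis
qed

context dvr
begin

lemma equiv_level:
  assumes "\<mu> \<noteq> 0" "mdet S \<noteq> 0" "bq_disc F \<noteq> 0"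
  shows "bq_level v (smult (\<mu>^2) (sb F S)) = bq_level v F + v (\<mu> * mdet S)"
proof -
  have m: "\<mu> * mdet S \<noteq> 0" using assms by simp
  have "v (bq_disc (smult (\<mu>^2) (sb F S))) = 12 * v (\<mu> * mdet S) + v (bq_disc F)"
    unfolding equiv_disc[OF assms(1,2)] using vmult[of "(\<mu> * mdet S)^12" "bq_disc F"] vpow[OF m, of 12] assms(3) m
    by simp
  then show ?thesis unfolding bq_level_def equiv_min[OF assms(1,2)] by simp
qed

end


context dvr
begin

lemma in_O_sq: "in_O v (x^2) \<Longrightarrow> in_O v x"
proof (cases "x = 0")
  case False
  assume "in_O v (x^2)"
  then have "0 \<le> 2 * v x" using vpow[OF False, of 2] False by (simp add: in_O_def vge_def)
  then show ?thesis by (simp add: in_O_def vge_def)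
qed (simp add: in_O_def vge_def)

lemma vge_pow1: "vge v 1 u \<Longrightarrow> vge v (int k) (u^k)"
  using vge_pow[of 1 u k] by simp

lemma jac_integral: "vgeP 0 F \<Longrightarrow> w_integral v (jac F)"
  unfolding jac_qpoly w_integral_def using vgeP_coeffs[of 0 F] by (simp add: in_O_def[symmetric] O_intros)

lemma disc_integral: "vgeP 0 F \<Longrightarrow> in_O v (bq_disc F)"
  unfolding bq_disc_def bq_a_def bq_b_def bq_c_def bq_d_def bq_e_def Let_def
  using vgeP_coeffs[of 0 F] by (simp add: in_O_def[symmetric] O_intros)

lemma level_pos_wiso:
  assumes int: "vgeP 0 F" and nd: "bq_disc F \<noteq> 0" and lv: "bq_level v F > 0"
  shows "\<exists>u r s t W'. u \<noteq> 0 \<and> wiso u r s t (jac F) W' \<and> w_integral v W' \<and> vge v 1 u"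
proof -
  define P where "P n \<longleftrightarrow> (\<exists>W'. w_integral v W' \<and> w_iso (jac F) W' \<and> w_disc W' \<noteq> 0 \<and> v (w_disc W') = int n)" for n
  have d0: "0 \<le> v (bq_disc F)" using disc_integral[OF int] nd by (simp add: in_O_def vge_def)
  have wi: "w_iso (jac F) (jac F)" unfolding w_iso_iff using wiso_refl[of "jac F"] one_neq_zero by blast
  have "w_disc (jac F) \<noteq> 0" "v (w_disc (jac F)) = int (nat (v (bq_disc F)))"
    using nd d0 bq_disc_jac[of F] by auto
  then have "P (nat (v (bq_disc F)))" unfolding P_def using jac_integral[OF int] wi by blast
  then have "P (LEAST n. P n)" by (rule LeastI)
  then obtain W' where W': "w_integral v W'" "w_iso (jac F) W'" "w_disc W' \<noteq> 0" "v (w_disc W') = int (LEAST n. P n)"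
    unfolding P_def by blast
  have "min_disc_val v (jac F) = int (LEAST n. P n)" unfolding min_disc_val_def P_def by (rule refl)
  then have "(v (bq_disc F) - v (w_disc W')) div 12 > 0" using lv W'(4) unfolding bq_level_def by simp
  then have g: "v (bq_disc F) - v (w_disc W') \<ge> 12" by linarith
  obtain u r s t where w: "u \<noteq> 0" "wiso u r s t (jac F) W'" using W'(2) w_iso_iff by blast
  have "bq_disc F = u^12 * w_disc W'" using wiso_disc[OF w(2)] bq_disc_jac by metis
  then have "v (bq_disc F) = 12 * v u + v (w_disc W')"
    using vmult[of "u^12" "w_disc W'"] vpow[OF w(1), of 12] w(1) W'(3) by simp
  then have "v u \<ge> 1" using g by linarith
  then have "vge v 1 u" by (simp add: vge_def)
  then show ?thesis using w W'(1) by blast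
qed

lemma no_neg_root:
  assumes r0: "r \<noteq> 0" and rneg: "v r < 0"
    and P: "in_O v P0" "in_O v P1" "in_O v P2" and e4: "4*r^3 = P0 + P1*r + P2*r^2"
    and Q: "in_O v Q0" "in_O v Q1" "in_O v Q2" "in_O v Q3" and e3: "3*r^4 = Q0 + Q1*r + Q2*r^2 + Q3*r^3"
  shows False
proof -
  define n where "n = nat (- v r)"
  have n1: "n \<ge> 1" using rneg n_def by simp
  define p where "p = \<pi>^n"
  define \<rho> where "\<rho> = r * p"
  have p0: "p \<noteq> 0" using pi0 p_def by simp
  have vp: "v p = int n" using p_def by simp
  have vrho: "v \<rho> = 0" using vmult[OF r0 p0] vp n_def rneg \<rho>_def by simp
  have rho0: "\<rho> \<noteq> 0" using r0 p0 \<rho>_def by simp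
  have rhoO: "in_O v \<rho>" "\<not> vge v 1 \<rho>" using vrho rho0 by (auto simp: in_O_def vge_def)
  have p1: "vge v 1 p" using vp n1 by (simp add: vge_def)
  have pO: "in_O v p" using in_O_vge[of 1 p] p1 by simp
  have "4*\<rho>^3 = P0*p^3 + P1*\<rho>*p^2 + P2*\<rho>^2*p" using e4 unfolding \<rho>_def by algebra
  moreover have "vge v 1 (P0*p^3 + P1*\<rho>*p^2 + P2*\<rho>^2*p)"
    using P p1 pO rhoO by (intro vge_add vge_mult_O vge_mult_O' O_intros; simp add: power2_eq_square power3_eq_cube vge_mult_O)
  ultimately have "vge v 1 (4*\<rho>^3)" by simp
  then have "vge v 1 (\<rho>^3 * 4)" by (simp add: mult.commute)
  then have v4: "vge v 1 4" using unit_cancel unit_pow[OF rhoO] by blast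
  have "3*\<rho>^4 = Q0*p^4 + Q1*\<rho>*p^3 + Q2*\<rho>^2*p^2 + Q3*\<rho>^3*p" using e3 unfolding \<rho>_def by algebra
  moreover have "vge v 1 (Q0*p^4 + Q1*\<rho>*p^3 + Q2*\<rho>^2*p^2 + Q3*\<rho>^3*p)"
    using Q p1 pO rhoO by (intro vge_add vge_mult_O vge_mult_O' O_intros; simp add: power2_eq_square power3_eq_cube power4_eq_xxxx vge_mult_O)
  ultimately have "vge v 1 (3*\<rho>^4)" by simp
  then have "vge v 1 (\<rho>^4 * 3)" by (simp add: mult.commute)
  then have v3: "vge v 1 3" using unit_cancel unit_pow[OF rhoO] by blast
  have "vge v 1 (4 - 3)" using vge_diff[OF v4 v3] .
  then show False by (simp add: vge_def)
qed

end


definition A4 :: "'a::field poly \<Rightarrow> 'a" where "A4 F = coeff F 3 * coeff F 1 - 4 * coeff F 4 * coeff F 0"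
definition A6 :: "'a::field poly \<Rightarrow> 'a" where
  "A6 F = coeff F 4 * (coeff F 1)^2 + (coeff F 3)^2 * coeff F 0 - 4 * coeff F 4 * coeff F 2 * coeff F 0"

lemma jac_A: "jac F = (0, coeff F 2, 0, A4 F, A6 F)"
  by (simp add: jac_qpoly A4_def A6_def)

lemma wiso_jac:
  assumes "wiso u r s t (jac F) (a1', a2', a3', a4', a6')"
  shows "u * a1' = 2*s" "u^2 * a2' = coeff F 2 + 3*r - s^2" "u^3 * a3' = 2*t"
    "u^4 * a4' = A4 F + 2*r*coeff F 2 + 3*r^2 - 2*s*t"
    "u^6 * a6' = A6 F + r * A4 F + r^2 * coeff F 2 + r^3 - t^2"
  using assms unfolding jac_A by (simp_all add: algebra_simps)

context dvr
begin

lemma A_integral: "vgeP 0 F \<Longrightarrow> in_O v (A4 F) \<and> in_O v (A6 F) \<and> in_O v (coeff F 2)"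
  unfolding A4_def A6_def using vgeP_coeffs[of 0 F] by (simp add: in_O_def[symmetric] O_intros)

lemma rst_integral:
  assumes int: "vgeP 0 F" and w: "wiso u r s t (jac F) W'" and wi: "w_integral v W'" and uO: "in_O v u"
  shows "in_O v r \<and> in_O v s \<and> in_O v t"
proof -
  obtain a1 a2 a3 a4 a6 where W': "W' = (a1,a2,a3,a4,a6)" by (cases W') auto
  have aO: "in_O v a1" "in_O v a2" "in_O v a3" "in_O v a4" "in_O v a6" using wi W' by (auto simp: w_integral_def)
  note h = wiso_jac[OF w[unfolded W']]
  define c where "c = coeff F 2"
  define X where "X = A4 F"
  define Y where "Y = A6 F"
  have cO: "in_O v c" "in_O v X" "in_O v Y" using A_integral[OF int] c_def X_def Y_def by auto
  note h' = h[folded c_def X_def Y_def]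
  have rO: "in_O v r"
  proof (rule ccontr)
    assume nr: "\<not> in_O v r"
    then have r0: "r \<noteq> 0" and rneg: "v r < 0" by (auto simp: in_O_def vge_def)
    have e4: "4*r^3 = (u^6*(a3^2 + 4*a6) - 4*Y) + (-4*X)*r + (-4*c)*r^2"
      using h' by algebra
    have e3: "3*r^4 = (u^8*(a1^2*a6 + 4*a2*a6 - a1*a3*a4 + a2*a3^2 - a4^2) - (4*c*Y - X^2)) + (-12*Y)*r + (-6*X)*r^2 + (-4*c)*r^3"
      using h' by algebra
    show False
      apply (rule no_neg_root[OF r0 rneg _ _ _ e4 _ _ _ _ e3])
      using aO uO cO by (auto intro!: O_intros)
  qed
  have "s^2 = c + 3*r - u^2*a2" using h' by algebra
  then have sO: "in_O v s" using in_O_sq[of s] aO uO cO rO by (auto intro!: O_intros)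
  have "t^2 = Y + r*X + r^2*c + r^3 - u^6*a6" using h' by algebra
  then have tO: "in_O v t" using in_O_sq[of t] aO uO cO rO by (auto intro!: O_intros)
  show ?thesis using rO sO tO by blast
qed

lemma two_unit: "\<not> vge v 1 2 \<Longrightarrow> in_O v 2 \<and> \<not> vge v 1 2" using in_O_numeral by blast

lemma congr_basic:
  assumes int: "vgeP 0 F" and nd: "bq_disc F \<noteq> 0" and lv: "bq_level v F > 0" and odd: "\<not> vge v 1 2"
  shows "\<exists>r s t. in_O v r \<and> in_O v s \<and> in_O v t \<and> vge v 1 s \<and> vge v 3 t \<and>
     vge v 2 (coeff F 2 + 3*r - s^2) \<and> vge v 4 (A4 F + 2*r*coeff F 2 + 3*r^2 - 2*s*t) \<and>
     vge v 6 (A6 F + r * A4 F + r^2 * coeff F 2 + r^3 - t^2)"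
proof -
  obtain u r s t W' where w: "u \<noteq> 0" "wiso u r s t (jac F) W'" "w_integral v W'" "vge v 1 u"
    using level_pos_wiso[OF int nd lv] by blast
  have uO: "in_O v u" using w(4) in_O_vge[of 1 u] by simp
  have rst: "in_O v r" "in_O v s" "in_O v t" using rst_integral[OF int w(2) w(3) uO] by auto
  obtain a1 a2 a3 a4 a6 where W': "W' = (a1,a2,a3,a4,a6)" by (cases W') auto
  have aO: "in_O v a1" "in_O v a2" "in_O v a3" "in_O v a4" "in_O v a6" using w(3) W' by (auto simp: w_integral_def)
  note h = wiso_jac[OF w(2)[unfolded W']]
  have u1: "vge v 1 (u*a1)" using vge_mult_O[OF w(4) aO(1)] .
  have u2: "vge v 2 (u^2*a2)" using vge_mult_O[OF vge_pow1[OF w(4), of 2] aO(2)] by simp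
  have u3: "vge v 3 (u^3*a3)" using vge_mult_O[OF vge_pow1[OF w(4), of 3] aO(3)] by simp
  have u4: "vge v 4 (u^4*a4)" using vge_mult_O[OF vge_pow1[OF w(4), of 4] aO(4)] by simp
  have u6: "vge v 6 (u^6*a6)" using vge_mult_O[OF vge_pow1[OF w(4), of 6] aO(5)] by simp
  have s1: "vge v 1 s" using u1 h(1) unit_cancel[of 2 1 s] odd in_O_numeral by auto
  have t3: "vge v 3 t" using u3 h(3) unit_cancel[of 2 3 t] odd in_O_numeral by auto
  show ?thesis using rst s1 t3 u2 u4 u6 h by auto
qed

end


context dvr
begin

lemma vmulI: "vge v a x \<Longrightarrow> vge v b y \<Longrightarrow> k \<le> a + b \<Longrightarrow> vge v k (x*y)"
  using vge_mult vge_mono by blast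
lemma vpowI: "vge v a x \<Longrightarrow> k \<le> int n * a \<Longrightarrow> vge v k (x^n)"
  using vge_pow vge_mono by blast
lemma vnumI: "vge v 0 (numeral n)" using in_O_numeral by (simp add: in_O_def)
lemma vmonoI: "vge v a x \<Longrightarrow> k \<le> a \<Longrightarrow> vge v k x" using vge_mono by blast

lemma vaddE: "vge v a x \<Longrightarrow> vge v b y \<Longrightarrow> vge v (min a b) (x+y)"
  using vge_add vge_mono by (meson min.cobounded1 min.cobounded2)
lemma vdiffE: "vge v a x \<Longrightarrow> vge v b y \<Longrightarrow> vge v (min a b) (x-y)"
  using vge_diff vge_mono by (meson min.cobounded1 min.cobounded2)
lemma vnegE: "vge v a x \<Longrightarrow> vge v a (-x)" by simp

lemmas vE = vaddE vdiffE vnegE vge_mult vge_pow vnumI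

lemma test1: assumes "vge v 1 r" "vge v 1 a" "vge v 0 b" shows "vge v 2 (r*a + 4*b*r^2)"
  by (insert assms, rule vmonoI, (assumption | rule vE)+, simp)

lemma vO: "in_O v x \<Longrightarrow> vge v 0 x" by (simp add: in_O_def)

lemma P_lemma0:
  assumes int: "vgeP 0 F" and nd: "bq_disc F \<noteq> 0" and lv: "bq_level v F > 0" and odd: "\<not> vge v 1 2"
  shows "\<exists>r. in_O v r \<and> vge v 1 (coeff F 2 + 3*r) \<and> vge v 1 (A4 F + 2*r*coeff F 2 + 3*r^2)
     \<and> vge v 1 (A6 F + r * A4 F + r^2 * coeff F 2 + r^3)"
proof -
  obtain r s t where h: "in_O v r" "in_O v s" "in_O v t" "vge v 1 s" "vge v 3 t"
     "vge v 2 (coeff F 2 + 3*r - s^2)" "vge v 4 (A4 F + 2*r*coeff F 2 + 3*r^2 - 2*s*t)"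
     "vge v 6 (A6 F + r * A4 F + r^2 * coeff F 2 + r^3 - t^2)"
    using congr_basic[OF int nd lv odd] by blast
  have "coeff F 2 + 3*r = (coeff F 2 + 3*r - s^2) + s^2" by simp
  moreover have "vge v 1 ((coeff F 2 + 3*r - s^2) + s^2)"
    by (insert h(6,4), rule vmonoI, (assumption | rule vE)+, simp)
  ultimately have 1: "vge v 1 (coeff F 2 + 3*r)" by simp
  have "A4 F + 2*r*coeff F 2 + 3*r^2 = (A4 F + 2*r*coeff F 2 + 3*r^2 - 2*s*t) + 2*s*t" by simp
  moreover have "vge v 1 ((A4 F + 2*r*coeff F 2 + 3*r^2 - 2*s*t) + 2*s*t)"
    by (insert h(7,4,5), rule vmonoI, (assumption | rule vE)+, simp)
  ultimately have 2: "vge v 1 (A4 F + 2*r*coeff F 2 + 3*r^2)" by simp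
  have "A6 F + r * A4 F + r^2 * coeff F 2 + r^3 = (A6 F + r * A4 F + r^2 * coeff F 2 + r^3 - t^2) + t^2" by simp
  moreover have "vge v 1 ((A6 F + r * A4 F + r^2 * coeff F 2 + r^3 - t^2) + t^2)"
    by (insert h(8,5), rule vmonoI, (assumption | rule vE)+, simp)
  ultimately have 3: "vge v 1 (A6 F + r * A4 F + r^2 * coeff F 2 + r^3)" by simp
  show ?thesis using h(1) 1 2 3 by blast
qed

lemma A_smult: "coeff (smult k F) 2 = k * coeff F 2" "A4 (smult k F) = k^2 * A4 F" "A6 (smult k F) = k^3 * A6 F"
  by (simp_all add: A4_def A6_def algebra_simps power2_eq_square power3_eq_cube)

lemma P_lemma1:
  assumes int1: "vgeP 0 F1" and FF: "F = smult \<pi> F1" and nd: "bq_disc F \<noteq> 0" and lv: "bq_level v F > 0" and odd: "\<not> vge v 1 2"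
  shows "\<exists>r. in_O v r \<and> vge v 1 (coeff F1 2 + 3*r) \<and> vge v 1 (A4 F1 + 2*r*coeff F1 2 + 3*r^2)
     \<and> vge v 1 (A6 F1 + r * A4 F1 + r^2 * coeff F1 2 + r^3)"
proof -
  have int: "vgeP 0 F" unfolding FF vgeP_def using vgeP_coeffs[OF int1] in_O_pi
    by (auto simp: in_O_def[symmetric] intro: in_O_mult)
  obtain r s t where h: "in_O v r" "in_O v s" "in_O v t" "vge v 1 s" "vge v 3 t"
     "vge v 2 (coeff F 2 + 3*r - s^2)" "vge v 4 (A4 F + 2*r*coeff F 2 + 3*r^2 - 2*s*t)"
     "vge v 6 (A6 F + r * A4 F + r^2 * coeff F 2 + r^3 - t^2)"
    using congr_basic[OF int nd lv odd] by blast
  define c where "c = coeff F1 2"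
  define X where "X = A4 F1"
  define Y where "Y = A6 F1"
  have cO: "vge v 0 c" "vge v 0 X" "vge v 0 Y" using A_integral[OF int1] c_def X_def Y_def by (auto simp: vO)
  have FA: "coeff F 2 = \<pi> * c" "A4 F = \<pi>^2 * X" "A6 F = \<pi>^3 * Y" unfolding FF A_smult c_def X_def Y_def by simp_all
  note h' = h[unfolded FA]
  have "r^3 = (\<pi>^3 * Y + r * (\<pi>^2 * X) + r^2 * (\<pi> * c) + r^3 - t^2) - \<pi>^3 * Y - r * (\<pi>^2 * X) - r^2 * (\<pi> * c) + t^2"
    by simp
  moreover have "vge v 1 ((\<pi>^3 * Y + r * (\<pi>^2 * X) + r^2 * (\<pi> * c) + r^3 - t^2) - \<pi>^3 * Y - r * (\<pi>^2 * X) - r^2 * (\<pi> * c) + t^2)"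
    by (insert h'(8) cO vge_pi vO[OF h(1)] h(5), rule vmonoI, (assumption | rule vE)+, simp)
  ultimately have "vge v 1 (r^3)" by simp
  then have r1: "vge v 1 r" using vge1_pow[of r 3] h(1) by simp
  define r1 where "r1 = r / \<pi>"
  have rr: "r = \<pi> * r1" unfolding r1_def using pi0 by simp
  have r1O: "in_O v r1" using r1 vge_times_pi[of 0 r1] rr by (simp add: in_O_def)
  have e1: "\<pi> * (c + 3*r1) = (\<pi> * c + 3*r - s^2) + s^2" unfolding rr by (simp add: algebra_simps)
  have "vge v 2 ((\<pi> * c + 3*r - s^2) + s^2)"
    by (insert h'(6) h(4), rule vmonoI, (assumption | rule vE)+, simp)
  then have 1: "vge v 1 (c + 3*r1)" using vge_times_pi[of 1 "c + 3*r1"] e1 by simp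
  have e2: "\<pi>^2 * (X + 2*r1*c + 3*r1^2) = (\<pi>^2 * X + 2*r*(\<pi> * c) + 3*r^2 - 2*s*t) + 2*s*t" unfolding rr by (simp add: algebra_simps power2_eq_square)
  have "vge v 4 ((\<pi>^2 * X + 2*r*(\<pi> * c) + 3*r^2 - 2*s*t) + 2*s*t)"
    by (insert h'(7) h(4) h(5), rule vmonoI, (assumption | rule vE)+, simp)
  then have "vge v 2 (X + 2*r1*c + 3*r1^2)" using vge_times_pi_pow[of 2 2 "X + 2*r1*c + 3*r1^2"] e2 by simp
  then have 2: "vge v 1 (X + 2*r1*c + 3*r1^2)" by (rule vmonoI) simp
  have e3: "\<pi>^3 * (Y + r1 * X + r1^2 * c + r1^3) = (\<pi>^3 * Y + r * (\<pi>^2 * X) + r^2 * (\<pi> * c) + r^3 - t^2) + t^2"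
    unfolding rr by (simp add: algebra_simps power2_eq_square power3_eq_cube)
  have "vge v 6 ((\<pi>^3 * Y + r * (\<pi>^2 * X) + r^2 * (\<pi> * c) + r^3 - t^2) + t^2)"
    by (insert h'(8) h(5), rule vmonoI, (assumption | rule vE)+, simp)
  then have "vge v 3 (Y + r1 * X + r1^2 * c + r1^3)" using vge_times_pi_pow[of 3 3 "Y + r1 * X + r1^2 * c + r1^3"] e3 by simp
  then have 3: "vge v 1 (Y + r1 * X + r1^2 * c + r1^3)" by (rule vmonoI) simp
  show ?thesis using r1O 1 2 3 unfolding c_def X_def Y_def by blast
qed

end


context dvr
begin

lemma not_vgeP1: "\<not> vgeP 1 F \<Longrightarrow> degree F \<le> 4 \<Longrightarrow> \<exists>i\<le>4. \<not> vge v 1 (coeff F i)"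
  unfolding vgeP_def by (metis coeff_eq_0 le_less_linear order.trans vge_0)

lemma four_unit: "\<not> vge v 1 2 \<Longrightarrow> in_O v 4 \<and> \<not> vge v 1 (4::'a)"
  using unit_mult[of 2 2] in_O_numeral by (metis mult_2_right numeral_Bit0 one_plus_numeral numeral_plus_numeral semiring_norm(2) numeral_One)

lemma D4:
  assumes int: "vgeP 0 F" and dg: "degree F \<le> 4" and nd: "bq_disc F \<noteq> 0" and lv: "bq_level v F > 0" and odd: "\<not> vge v 1 2"
    and nv1: "\<not> vgeP 1 F" and ce: "vge v 1 (coeff F 0)" and cd: "vge v 1 (coeff F 1)" and cc: "vge v 1 (coeff F 2)"
  shows "vge v 2 (coeff F 0)"
proof -
  obtain r s t where h: "in_O v r" "in_O v s" "in_O v t" "vge v 1 s" "vge v 3 t"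
     "vge v 2 (coeff F 2 + 3*r - s^2)" "vge v 4 (A4 F + 2*r*coeff F 2 + 3*r^2 - 2*s*t)"
     "vge v 6 (A6 F + r * A4 F + r^2 * coeff F 2 + r^3 - t^2)"
    using congr_basic[OF int nd lv odd] by blast
  define a where "a = coeff F 4"
  define b where "b = coeff F 3"
  define c where "c = coeff F 2"
  define d where "d = coeff F 1"
  define e where "e = coeff F 0"
  have ab: "vge v 0 a" "vge v 0 b" using int unfolding vgeP_def a_def b_def by auto
  have cde: "vge v 1 c" "vge v 1 d" "vge v 1 e" using cc cd ce c_def d_def e_def by auto
  have A4e: "A4 F = b*d - 4*a*e" and A6e: "A6 F = a*d^2 + b^2*e - 4*a*c*e"
    unfolding A4_def A6_def a_def b_def c_def d_def e_def by simp_all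
  have A41: "vge v 1 (A4 F)" unfolding A4e by (insert cde ab, rule vmonoI, (assumption | rule vE)+, simp)
  have A61: "vge v 1 (A6 F)" unfolding A6e by (insert cde ab, rule vmonoI, (assumption | rule vE)+, simp)
  note h' = h[folded c_def]
  have "r^3 = (A6 F + r * A4 F + r^2 * c + r^3 - t^2) - A6 F - r * A4 F - r^2 * c + t^2" by simp
  moreover have "vge v 1 ((A6 F + r * A4 F + r^2 * c + r^3 - t^2) - A6 F - r * A4 F - r^2 * c + t^2)"
    by (insert h'(8) A41 A61 cde vO[OF h(1)] h(5), rule vmonoI, (assumption | rule vE)+, simp)
  ultimately have "vge v 1 (r^3)" by simp
  then have r1: "vge v 1 r" using vge1_pow[of r 3] h(1) by simp
  have "A6 F = (A6 F + r * A4 F + r^2 * c + r^3 - t^2) - r * A4 F - r^2 * c - r^3 + t^2" by simp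
  moreover have "vge v 2 ((A6 F + r * A4 F + r^2 * c + r^3 - t^2) - r * A4 F - r^2 * c - r^3 + t^2)"
    by (insert h'(8) A41 r1 cde h(5), rule vmonoI, (assumption | rule vE)+, simp)
  ultimately have A62: "vge v 2 (A6 F)" by simp
  have "A4 F = (A4 F + 2*r*c + 3*r^2 - 2*s*t) - 2*r*c - 3*r^2 + 2*s*t" by simp
  moreover have "vge v 2 ((A4 F + 2*r*c + 3*r^2 - 2*s*t) - 2*r*c - 3*r^2 + 2*s*t)"
    by (insert h'(7) r1 cde h(4) h(5), rule vmonoI, (assumption | rule vE)+, simp)
  ultimately have A42: "vge v 2 (A4 F)" by simp
  obtain i where i: "i \<le> 4" "\<not> vge v 1 (coeff F i)" using not_vgeP1[OF nv1 dg] by blast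
  have "i \<noteq> 0 \<and> i \<noteq> 1 \<and> i \<noteq> 2" using i(2) cde unfolding c_def d_def e_def by (intro conjI notI; simp)
  with i(1) have "i = 3 \<or> i = 4" by auto
  show ?thesis
  proof (cases "vge v 1 b")
    case False
    have bu: "in_O v (b^2)" "\<not> vge v 1 (b^2)" using unit_pow[of b 2] False ab(2) by (auto simp: in_O_def)
    have "b^2 * e = A6 F - a*d^2 + 4*a*c*e" unfolding A6e by simp
    moreover have "vge v 2 (A6 F - a*d^2 + 4*a*c*e)"
      by (insert A62 cde ab, rule vmonoI, (assumption | rule vE)+, simp)
    ultimately have "vge v 2 (b^2 * e)" by simp
    then show ?thesis using unit_cancel[OF bu] e_def by simp
  next
    case True
    then have au: "\<not> vge v 1 a" using i \<open>i = 3 \<or> i = 4\<close> a_def b_def by auto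
    have au': "in_O v (4*a)" "\<not> vge v 1 (4*a)" using unit_mult[of 4 a] four_unit[OF odd] au ab(1) by (auto simp: in_O_def)
    have "4*a*e = b*d - A4 F" unfolding A4e by simp
    moreover have "vge v 2 (b*d - A4 F)"
      by (insert A42 cde True, rule vmonoI, (assumption | rule vE)+, simp)
    ultimately have "vge v 2 (4*a*e)" by simp
    then show ?thesis using unit_cancel[OF au'] e_def by (simp add: mult.assoc)
  qed
qed

end


lemma lin3_expl: "[:-x0, z0:]^3 * [:h0, h1:] = qpoly (- (x0^3*h0)) (3*x0^2*z0*h0 - x0^3*h1)
   (3*x0^2*z0*h1 - 3*x0*z0^2*h0) (z0^3*h0 - 3*x0*z0^2*h1) (z0^3*h1)"
  by (simp add: qpoly_def numeral_eq_Suc algebra_simps power2_eq_square)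

lemma sb_lin3: "sb ([:-x0, z0:]^3 * [:h0, h1:]) (A,B,C,D) =
   [:-(x0*D - z0*B), z0*A - x0*C:]^3 * [:h1*B + h0*D, h1*A + h0*C:]"
  unfolding lin3_expl sb_qpoly
  unfolding S0_def S1_def S2_def S3_def S4_def qpoly_def
  by (simp only: pCons_eq_iff) algebra

context dvr
begin

lemma rootI:
  assumes "in_O v x0" "in_O v z0" "\<not> (vge v 1 x0 \<and> vge v 1 z0)" "in_O v h0" "in_O v h1"
    "vgeP 1 (P - [:-x0, z0:]^3 * [:h0, h1:])"
  shows "bq_root_mult_ge v P x0 z0 3"
  unfolding bq_root_mult_ge_def
proof (intro conjI exI[of _ "[:h0, h1:]"])
  show "degree [:h0, h1:] \<le> 4 - 3" by simp
  show "\<forall>i. in_O v (coeff [:h0, h1:] i)" using assms(4,5) by (auto simp: coeff_pCons in_O_0 split: nat.splits)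
  show "\<forall>i. vge v 1 (coeff (P - [:- x0, z0:] ^ 3 * [:h0, h1:]) i)" using assms(6) by (simp add: vgeP_def)
qed (use assms in auto)

lemma rootD:
  assumes "bq_root_mult_ge v P x0 z0 3"
  shows "\<exists>h0 h1. in_O v x0 \<and> in_O v z0 \<and> \<not> (vge v 1 x0 \<and> vge v 1 z0) \<and> in_O v h0 \<and> in_O v h1 \<and>
    vgeP 1 (P - [:-x0, z0:]^3 * [:h0, h1:])"
proof -
  obtain H where H: "degree H \<le> 1" "\<forall>i. in_O v (coeff H i)" "\<forall>i. vge v 1 (coeff (P - [:-x0,z0:]^3 * H) i)"
    and xz: "in_O v x0" "in_O v z0" "\<not> (vge v 1 x0 \<and> vge v 1 z0)"
    using assms unfolding bq_root_mult_ge_def by auto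
  have "H = [:coeff H 0, coeff H 1:]"
    using H(1) by (intro poly_eqI) (auto simp: coeff_pCons coeff_eq_0 split: nat.splits)
  then show ?thesis using H xz unfolding vgeP_def by metis
qed

lemma root_transform:
  assumes r: "bq_root_mult_ge v P x0 z0 3" and g: "GL2O N"
  shows "\<exists>x0' z0'. bq_root_mult_ge v (sb P N) x0' z0' 3"
proof -
  obtain A B C D where N: "N = (A,B,C,D)" by (cases N) auto
  obtain h0 h1 where h: "in_O v x0" "in_O v z0" "\<not> (vge v 1 x0 \<and> vge v 1 z0)" "in_O v h0" "in_O v h1"
    "vgeP 1 (P - [:-x0, z0:]^3 * [:h0, h1:])" using rootD[OF r] by blast
  have ent: "in_O v A" "in_O v B" "in_O v C" "in_O v D" "in_O v (A*D - B*C)" "\<not> vge v 1 (A*D - B*C)"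
    using g N by (auto intro!: O_intros)
  have "vgeP 1 (sb (P - [:-x0, z0:]^3 * [:h0, h1:]) N)" using vgeP_sb_GL2O[OF g h(6)] .
  then have 1: "vgeP 1 (sb P N - [:-(x0*D - z0*B), z0*A - x0*C:]^3 * [:h1*B + h0*D, h1*A + h0*C:])"
    unfolding sb_diff N sb_lin3 .
  have 2: "\<not> (vge v 1 (x0*D - z0*B) \<and> vge v 1 (z0*A - x0*C))"
  proof
    assume a: "vge v 1 (x0*D - z0*B) \<and> vge v 1 (z0*A - x0*C)"
    have "(A*D - B*C) * z0 = D * (z0*A - x0*C) + C * (x0*D - z0*B)" by algebra
    moreover have "vge v 1 (D * (z0*A - x0*C) + C * (x0*D - z0*B))"
      using a ent by (intro vge_add vge_mult_O') auto
    ultimately have z: "vge v 1 z0" using unit_cancel[OF ent(5,6)] by simp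
    have "(A*D - B*C) * x0 = B * (z0*A - x0*C) + A * (x0*D - z0*B)" by algebra
    moreover have "vge v 1 (B * (z0*A - x0*C) + A * (x0*D - z0*B))"
      using a ent by (intro vge_add vge_mult_O') auto
    ultimately have x: "vge v 1 x0" using unit_cancel[OF ent(5,6)] by simp
    show False using x z h(3) by blast
  qed
  show ?thesis
    apply (rule exI, rule exI, rule rootI[OF _ _ 2 _ _ 1])
    using h ent by (auto intro!: O_intros)
qed

end


lemma diff_lin3: "degree G \<le> 4 \<Longrightarrow> G - [:-x0, z0:]^3 * [:h0, h1:] =
   qpoly (coeff G 0 + x0^3*h0) (coeff G 1 - (3*x0^2*z0*h0 - x0^3*h1))
   (coeff G 2 - (3*x0^2*z0*h1 - 3*x0*z0^2*h0)) (coeff G 3 - (z0^3*h0 - 3*x0*z0^2*h1)) (coeff G 4 - z0^3*h1)"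
  apply (subst qpoly_eq[of G], assumption)
  unfolding lin3_expl qpoly_diff by simp

context dvr
begin

lemma root_from_P_a:
  assumes int: "vgeP 0 G" and dg: "degree G \<le> 4" and b0: "coeff G 3 = 0"
    and au: "in_O v (coeff G 4)" "\<not> vge v 1 (coeff G 4)" and odd: "\<not> vge v 1 2"
    and rO: "in_O v r" and P1: "vge v 1 (coeff G 2 + 3*r)" and P2: "vge v 1 (A4 G + 2*r*coeff G 2 + 3*r^2)"
    and P3: "vge v 1 (A6 G + r * A4 G + r^2 * coeff G 2 + r^3)"
  shows "\<exists>x0 z0. bq_root_mult_ge v G x0 z0 3"
proof -
  define a where "a = coeff G 4"
  define c where "c = coeff G 2"
  define d where "d = coeff G 1"
  define e where "e = coeff G 0"
  have cO: "vge v 0 a" "vge v 0 c" "vge v 0 d" "vge v 0 e" using int unfolding vgeP_def a_def c_def d_def e_def by auto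
  have A4e: "A4 G = - 4*a*e" and A6e: "A6 G = a*d^2 - 4*a*c*e"
    unfolding A4_def A6_def a_def c_def d_def e_def b0 by simp_all
  define Q1 where "Q1 = 4*a*e + 3*r^2"
  define Q2 where "Q2 = a*d^2 - 8*r^3"
  have p1: "vge v 1 (c + 3*r)" using P1 c_def by simp
  have p2: "vge v 1 (- 4*a*e + 2*r*c + 3*r^2)" using P2 A4e c_def by simp
  have p3: "vge v 1 (a*d^2 - 4*a*c*e + r * (- 4*a*e) + r^2 * c + r^3)" using P3 A4e A6e c_def by simp
  have "Q1 = - (- 4*a*e + 2*r*c + 3*r^2) + 2*r*(c + 3*r)" unfolding Q1_def by algebra
  moreover have "vge v 1 (- (- 4*a*e + 2*r*c + 3*r^2) + 2*r*(c + 3*r))"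
    by (insert p2 p1 vO[OF rO], rule vmonoI, (assumption | rule vE)+, simp)
  ultimately have q1: "vge v 1 Q1" by simp
  have "Q2 = (a*d^2 - 4*a*c*e + r * (- 4*a*e) + r^2 * c + r^3) - 4*r^2*(c + 3*r) + (c + r)*Q1"
    unfolding Q1_def Q2_def by algebra
  moreover have "vge v 1 ((a*d^2 - 4*a*c*e + r * (- 4*a*e) + r^2 * c + r^3) - 4*r^2*(c + 3*r) + (c + r)*Q1)"
    by (insert p3 p1 q1 vO[OF rO] cO, rule vmonoI, (assumption | rule vE)+, simp)
  ultimately have q2: "vge v 1 Q2" by simp
  have aO: "in_O v a" "\<not> vge v 1 a" using au a_def by auto
  have fu: "in_O v 4 \<and> \<not> vge v 1 (4::'a)" using four_unit[OF odd] .
  have a4u: "in_O v (4*a)" "\<not> vge v 1 (4*a)" using unit_mult[of 4 a] fu aO by auto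
  have Gq: "G - [:-x0, z0:]^3 * [:h0, h1:] = qpoly (e + x0^3*h0) (d - (3*x0^2*z0*h0 - x0^3*h1))
   (c - (3*x0^2*z0*h1 - 3*x0*z0^2*h0)) (0 - (z0^3*h0 - 3*x0*z0^2*h1)) (a - z0^3*h1)" for x0 z0 h0 h1
    using diff_lin3[OF dg, of x0 z0 h0 h1] unfolding a_def c_def d_def e_def b0 .
  show ?thesis
  proof (cases "vge v 1 r")
    case True
    have "c = (c + 3*r) - 3*r" by simp
    moreover have "vge v 1 ((c + 3*r) - 3*r)" by (insert p1 True, rule vmonoI, (assumption | rule vE)+, simp)
    ultimately have c1: "vge v 1 c" by simp
    have "4*a*e = Q1 - 3*r^2" unfolding Q1_def by simp
    moreover have "vge v 1 (Q1 - 3*r^2)" by (insert q1 True, rule vmonoI, (assumption | rule vE)+, simp)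
    ultimately have "vge v 1 (4*a*e)" by simp
    then have e1: "vge v 1 e" using unit_cancel[OF a4u] by simp
    have "a*d^2 = Q2 + 8*r^3" unfolding Q2_def by simp
    moreover have "vge v 1 (Q2 + 8*r^3)" by (insert q2 True, rule vmonoI, (assumption | rule vE)+, simp)
    ultimately have "vge v 1 (a*(d^2))" by simp
    then have "vge v 1 (d^2)" using unit_cancel[OF aO] by simp
    then have d1: "vge v 1 d" using vge1_pow[of d 2] cO(3) by (simp add: in_O_def)
    have "vgeP 1 (G - [:-0, 1:]^3 * [:0, a:])" unfolding Gq vgeP_qpoly using c1 d1 e1 by simp
    then have "bq_root_mult_ge v G 0 1 3"
      by (rule rootI[rotated 5]) (use aO in \<open>simp_all add: O_intros vge_def\<close>)
    then show ?thesis by blast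
  next
    case False
    have ru: "in_O v r" "\<not> vge v 1 r" using rO False by auto
    have r0: "r \<noteq> 0" using False by (auto simp: vge_def)
    define \<rho> where "\<rho> = d * inverse (4*r)"
    have f0: "(4::'a) \<noteq> 0" using fu by (auto simp: vge_def)
    have rho: "4*r*\<rho> = d" unfolding \<rho>_def using r0 f0 by simp
    have i4: "in_O v (inverse (4*r))" using unit_inv[of "4*r"] unit_mult[of 4 r] fu ru by auto
    have dO: "in_O v d" using cO(3) by (simp add: in_O_def)
    have rhoO: "in_O v \<rho>" unfolding \<rho>_def by (rule in_O_mult[OF dO i4])
    have u16: "in_O v (16*r^2)" "\<not> vge v 1 (16*r^2)"
      using unit_mult[of 16 "r^2"] unit_pow[OF ru, of 2] unit_mult[of 4 4] fu by auto
    have u64: "in_O v (64*r^3)" "\<not> vge v 1 (64*r^3)"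
      using unit_mult[of 64 "r^3"] unit_pow[OF ru, of 3] unit_mult[of 16 4] unit_mult[of 4 4] fu by auto
    have u1024: "in_O v (1024*a*r^4)" "\<not> vge v 1 (1024*a*r^4)"
    proof -
      have "in_O v 16 \<and> \<not> vge v 1 (16::'a)" using unit_mult[of 4 4] fu by auto
      then have "in_O v 256 \<and> \<not> vge v 1 (256::'a)" using unit_mult[of 16 16] by auto
      then have "in_O v 1024 \<and> \<not> vge v 1 (1024::'a)" using unit_mult[of 256 4] fu by auto
      then have "in_O v (1024*a) \<and> \<not> vge v 1 (1024*a)" using unit_mult[of 1024 a] aO by auto
      then show "in_O v (1024*a*r^4)" "\<not> vge v 1 (1024*a*r^4)" using unit_mult[of "1024*a" "r^4"] unit_pow[OF ru, of 4] by auto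
    qed
    have "16*r^2 * (c + 6*a*\<rho>^2) = 16*r^2*(c + 3*r) + 6*Q2" unfolding Q2_def rho[symmetric] by (simp add: algebra_simps power2_eq_square power3_eq_cube power4_eq_xxxx)
    moreover have "vge v 1 (16*r^2*(c + 3*r) + 6*Q2)" by (insert p1 q2 vO[OF rO], rule vmonoI, (assumption | rule vE)+, simp)
    ultimately have k2: "vge v 1 (c + 6*a*\<rho>^2)" using unit_cancel[OF u16] by simp
    have "64*r^3 * (d - 8*a*\<rho>^3) = - 8*d*Q2" unfolding Q2_def rho[symmetric] by (simp add: algebra_simps power2_eq_square power3_eq_cube power4_eq_xxxx)
    moreover have "vge v 1 (- 8*d*Q2)" by (insert q2 cO(3), rule vmonoI, (assumption | rule vE)+, simp)
    ultimately have k1: "vge v 1 (d - 8*a*\<rho>^3)" using unit_cancel[OF u64] by simp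
    have "1024*a*r^4 * (e + 3*a*\<rho>^4) = 256*r^4*Q1 + 12*Q2^2 + 192*r^3*Q2" unfolding Q1_def Q2_def rho[symmetric] by (simp add: algebra_simps power2_eq_square power3_eq_cube power4_eq_xxxx)
    moreover have "vge v 1 (256*r^4*Q1 + 12*Q2^2 + 192*r^3*Q2)" by (insert q1 q2 vO[OF rO], rule vmonoI, (assumption | rule vE)+, simp)
    ultimately have k0: "vge v 1 (e + 3*a*\<rho>^4)" using unit_cancel[OF u1024] by simp
    have "vgeP 1 (G - [:-\<rho>, 1:]^3 * [:3*a*\<rho>, a:])"
      unfolding Gq vgeP_qpoly
      apply (intro conjI)
      subgoal using k0 by (simp add: algebra_simps power2_eq_square power3_eq_cube power4_eq_xxxx)
      subgoal using k1 by (simp add: algebra_simps power2_eq_square power3_eq_cube)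
      subgoal using k2 by (simp add: algebra_simps power2_eq_square power3_eq_cube)
      subgoal by simp
      subgoal by simp
      done
    then have "bq_root_mult_ge v G \<rho> 1 3"
      by (rule rootI[rotated 5]) (use aO rhoO in \<open>simp_all add: O_intros vge_def\<close>)
    then show ?thesis by blast
  qed
qed

end


context dvr
begin

lemma root_from_P_c:
  assumes int: "vgeP 0 G" and dg: "degree G \<le> 4"
    and a1: "vge v 1 (coeff G 4)" and e1: "vge v 1 (coeff G 0)"
    and rO: "in_O v r" and P1: "vge v 1 (coeff G 2 + 3*r)" and P2: "vge v 1 (A4 G + 2*r*coeff G 2 + 3*r^2)"
    and P3: "vge v 1 (A6 G + r * A4 G + r^2 * coeff G 2 + r^3)"
  shows "\<exists>x0 z0. bq_root_mult_ge v G x0 z0 3"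
proof -
  define a where "a = coeff G 4"
  define b where "b = coeff G 3"
  define c where "c = coeff G 2"
  define d where "d = coeff G 1"
  define e where "e = coeff G 0"
  have cO: "vge v 0 a" "vge v 0 b" "vge v 0 c" "vge v 0 d" "vge v 0 e" using int unfolding vgeP_def a_def b_def c_def d_def e_def by auto
  have ae: "vge v 1 a" "vge v 1 e" using a1 e1 a_def e_def by auto
  have A4e: "A4 G = b*d - 4*a*e" and A6e: "A6 G = a*d^2 + b^2*e - 4*a*c*e"
    unfolding A4_def A6_def a_def b_def c_def d_def e_def by simp_all
  have p1: "vge v 1 (c + 3*r)" using P1 c_def by simp
  have p2: "vge v 1 ((b*d - 4*a*e) + 2*r*c + 3*r^2)" using P2 A4e c_def by simp
  have p3: "vge v 1 ((a*d^2 + b^2*e - 4*a*c*e) + r * (b*d - 4*a*e) + r^2 * c + r^3)" using P3 A4e A6e c_def by simp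
  have "r^3 = ((a*d^2 + b^2*e - 4*a*c*e) + r * (b*d - 4*a*e) + r^2 * c + r^3) - r*((b*d - 4*a*e) + 2*r*c + 3*r^2) + r^2*(c + 3*r) - (a*d^2 + b^2*e - 4*a*c*e)"
    by algebra
  moreover have "vge v 1 (((a*d^2 + b^2*e - 4*a*c*e) + r * (b*d - 4*a*e) + r^2 * c + r^3) - r*((b*d - 4*a*e) + 2*r*c + 3*r^2) + r^2*(c + 3*r) - (a*d^2 + b^2*e - 4*a*c*e))"
    by (insert p3 p2 p1 ae cO vO[OF rO], rule vmonoI, (assumption | rule vE)+, simp)
  ultimately have "vge v 1 (r^3)" by metis
  then have r1: "vge v 1 r" using vge1_pow[of r 3] rO by simp
  have "c = (c + 3*r) - 3*r" by simp
  moreover have "vge v 1 ((c + 3*r) - 3*r)" by (insert p1 r1, rule vmonoI, (assumption | rule vE)+, simp)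
  ultimately have c1: "vge v 1 c" by simp
  have "b*d = ((b*d - 4*a*e) + 2*r*c + 3*r^2) + 4*a*e - 2*r*c - 3*r^2" by simp
  moreover have "vge v 1 (((b*d - 4*a*e) + 2*r*c + 3*r^2) + 4*a*e - 2*r*c - 3*r^2)"
    by (insert p2 ae cO r1, rule vmonoI, (assumption | rule vE)+, simp)
  ultimately have bd: "vge v 1 (b*d)" by simp
  have bord: "vge v 1 b \<or> vge v 1 d"
  proof (rule ccontr)
    assume "\<not> (vge v 1 b \<or> vge v 1 d)"
    then have "\<not> vge v 1 (b*d)" using unit_mult[of b d] cO by (auto simp: in_O_def)
    then show False using bd by simp
  qed
  have Gq: "G - [:-x0, z0:]^3 * [:h0, h1:] = qpoly (e + x0^3*h0) (d - (3*x0^2*z0*h0 - x0^3*h1))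
   (c - (3*x0^2*z0*h1 - 3*x0*z0^2*h0)) (b - (z0^3*h0 - 3*x0*z0^2*h1)) (a - z0^3*h1)" for x0 z0 h0 h1
    using diff_lin3[OF dg, of x0 z0 h0 h1] unfolding a_def b_def c_def d_def e_def .
  from bord show ?thesis
  proof
    assume b1: "vge v 1 b"
    have "vgeP 1 (G - [:-1, 0:]^3 * [:0, -d:])" unfolding Gq vgeP_qpoly using c1 b1 ae by simp
    then have "bq_root_mult_ge v G 1 0 3"
      by (rule rootI[rotated 5]) (use cO in \<open>simp_all add: O_intros vge_def in_O_def\<close>)
    then show ?thesis by blast
  next
    assume d1: "vge v 1 d"
    have "vgeP 1 (G - [:-0, 1:]^3 * [:b, 0:])" unfolding Gq vgeP_qpoly using c1 d1 ae by simp
    then have "bq_root_mult_ge v G 0 1 3"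
      by (rule rootI[rotated 5]) (use cO in \<open>simp_all add: O_intros vge_def in_O_def\<close>)
    then show ?thesis by blast
  qed
qed

definition oddH :: "'a poly \<Rightarrow> 'a poly \<Rightarrow> nat \<Rightarrow> bool" where
  "oddH F F1 w \<longleftrightarrow> vgeP 0 F \<and> degree F \<le> 4 \<and> bq_disc F \<noteq> 0 \<and> bq_level v F > 0 \<and> (w = 0 \<or> w = 1)
     \<and> F = smult (\<pi>^w) F1 \<and> vgeP 0 F1 \<and> degree F1 \<le> 4"

lemma P_all:
  assumes h: "oddH F F1 w" and odd: "\<not> vge v 1 2"
  shows "\<exists>r. in_O v r \<and> vge v 1 (coeff F1 2 + 3*r) \<and> vge v 1 (A4 F1 + 2*r*coeff F1 2 + 3*r^2)
     \<and> vge v 1 (A6 F1 + r * A4 F1 + r^2 * coeff F1 2 + r^3)"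
proof -
  have w: "w = 0 \<or> w = 1" using h oddH_def by blast
  then show ?thesis
  proof
    assume "w = 0"
    then have "F = F1" using h oddH_def by simp
    then show ?thesis using P_lemma0[OF _ _ _ odd] h oddH_def by auto
  next
    assume "w = 1"
    then have "F = smult \<pi> F1" using h oddH_def by simp
    then show ?thesis using P_lemma1[OF _ _ _ _ odd] h oddH_def by auto
  qed
qed

lemma oddH_transfer:
  assumes h: "oddH F F1 w" and g: "GL2O M"
  shows "oddH (sb F M) (sb F1 M) w"
proof -
  have d0: "mdet M \<noteq> 0" using GL2O_det0[OF g] .
  have vd: "v (mdet M) = 0" using GL2O_det[OF g] unit_v0 by blast
  have e1: "smult (1^2) (sb F M) = sb F M" by simp
  have dF: "bq_disc F \<noteq> 0" using h oddH_def by blast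
  have lev: "bq_level v (sb F M) = bq_level v F"
    using equiv_level[of 1 M F, OF _ d0 dF] vd unfolding e1 by simp
  have disc: "bq_disc (sb F M) \<noteq> 0"
    using equiv_disc[of 1 M F, OF _ d0] d0 dF unfolding e1 by simp
  show ?thesis using h lev disc vgeP_sb_GL2O[OF g] degree_sb sb_smult unfolding oddH_def by metis
qed

lemma oddH_back:
  assumes "oddH F F1 w" "GL2O M" "\<exists>x0 z0. bq_root_mult_ge v (sb F1 M) x0 z0 3"
  shows "\<exists>x0 z0. bq_root_mult_ge v F1 x0 z0 3"
proof -
  obtain x0 z0 where r: "bq_root_mult_ge v (sb F1 M) x0 z0 3" using assms(3) by blast
  have "sb (sb F1 M) (minv M) = F1" using sb_inv assms(1,2) GL2O_det0 oddH_def by blast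
  then show ?thesis using root_transform[OF r GL2O_minv[OF assms(2)]] by metis
qed

lemma root_A:
  assumes h: "oddH F F1 w" and odd: "\<not> vge v 1 2" and au: "\<not> vge v 1 (coeff F1 4)"
  shows "\<exists>x0 z0. bq_root_mult_ge v F1 x0 z0 3"
proof -
  define a where "a = coeff F1 4"
  define b where "b = coeff F1 3"
  have aO: "in_O v a" "\<not> vge v 1 a" using h au a_def unfolding oddH_def vgeP_def in_O_def by auto
  have fu: "in_O v 4 \<and> \<not> vge v 1 (4::'a)" using four_unit[OF odd] .
  have a4u: "in_O v (4*a)" "\<not> vge v 1 (4*a)" using unit_mult[of 4 a] fu aO by auto
  have a40: "4*a \<noteq> 0" using a4u by (auto simp: vge_def)
  define t where "t = - b * inverse (4*a)"
  have bO: "in_O v b" using h b_def unfolding oddH_def vgeP_def in_O_def by auto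
  have tO: "in_O v t" unfolding t_def using bO unit_inv[OF a4u] by (intro O_intros)
  have g: "GL2O (1,t,0,1)" using tO by (simp add: O_intros vge_def)
  have h2: "oddH (sb F (1,t,0,1)) (sb F1 (1,t,0,1)) w" using oddH_transfer[OF h g] .
  have c4: "coeff (sb F1 (1,t,0,1)) 4 = a" unfolding coeff_sb S4_def a_def by simp
  have c3: "coeff (sb F1 (1,t,0,1)) 3 = 0" unfolding coeff_sb S3_def a_def[symmetric] b_def[symmetric] t_def
    using a40 by (simp add: field_simps)
  obtain r where r: "in_O v r" "vge v 1 (coeff (sb F1 (1,t,0,1)) 2 + 3*r)"
    "vge v 1 (A4 (sb F1 (1,t,0,1)) + 2*r*coeff (sb F1 (1,t,0,1)) 2 + 3*r^2)"
    "vge v 1 (A6 (sb F1 (1,t,0,1)) + r * A4 (sb F1 (1,t,0,1)) + r^2 * coeff (sb F1 (1,t,0,1)) 2 + r^3)"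
    using P_all[OF h2 odd] by blast
  have "\<exists>x0 z0. bq_root_mult_ge v (sb F1 (1,t,0,1)) x0 z0 3"
    apply (rule root_from_P_a[OF _ _ c3 _ _ odd r])
    using h2 aO c4 unfolding oddH_def by auto
  then show ?thesis using oddH_back[OF h g] by blast
qed

lemma root_odd:
  assumes h: "oddH F F1 w" and odd: "\<not> vge v 1 2"
  shows "\<exists>x0 z0. bq_root_mult_ge v F1 x0 z0 3"
proof (cases "vge v 1 (coeff F1 4)")
  case False then show ?thesis using root_A[OF h odd] by blast
next
  case a1: True
  show ?thesis
  proof (cases "vge v 1 (coeff F1 0)")
    case False
    have g: "GL2O (0,1,1,0)" by (simp add: O_intros vge_def)
    have h2: "oddH (sb F (0,1,1,0)) (sb F1 (0,1,1,0)) w" using oddH_transfer[OF h g] .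
    have "coeff (sb F1 (0,1,1,0)) 4 = coeff F1 0" unfolding coeff_sb S4_def by simp
    then have "\<exists>x0 z0. bq_root_mult_ge v (sb F1 (0,1,1,0)) x0 z0 3" using root_A[OF h2 odd] False by simp
    then show ?thesis using oddH_back[OF h g] by blast
  next
    case e1: True
    obtain r where r: "in_O v r" "vge v 1 (coeff F1 2 + 3*r)" "vge v 1 (A4 F1 + 2*r*coeff F1 2 + 3*r^2)"
       "vge v 1 (A6 F1 + r * A4 F1 + r^2 * coeff F1 2 + r^3)"
      using P_all[OF h odd] by blast
    show ?thesis using root_from_P_c[OF _ _ a1 e1 r] h unfolding oddH_def by blast
  qed
qed

end


fun mscale :: "'a::field \<Rightarrow> 'a mat2 \<Rightarrow> 'a mat2" where
  "mscale l (A,B,C,D) = (l*A, l*B, l*C, l*D)"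

lemma sb_scale: "sb F (mscale l S) = smult (l^4) (sb F S)"
proof -
  obtain A B C D where S: "S = (A,B,C,D)" by (cases S) auto
  show ?thesis unfolding S mscale.simps sb_explicit qpoly_smult
    unfolding S0_def S1_def S2_def S3_def S4_def qpoly_def
    by (simp only: pCons_eq_iff) algebra
qed

lemma le4_cases: "i \<le> (4::nat) \<Longrightarrow> i = 0 \<or> i = 1 \<or> i = 2 \<or> i = 3 \<or> i = 4" by auto

lemma coeff_sb_diag: "i \<le> 4 \<Longrightarrow> coeff (sb P (1,0,0,\<delta>)) i = coeff P i * \<delta>^(4-i)"
  by (drule le4_cases, elim disjE; simp only: coeff_sb; simp add: S0_def S1_def S2_def S3_def S4_def)

lemma coeff_sb_diagx: "i \<le> 4 \<Longrightarrow> coeff (sb P (\<delta>,0,0,1)) i = coeff P i * \<delta>^i"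
  by (drule le4_cases, elim disjE; simp only: coeff_sb; simp add: S0_def S1_def S2_def S3_def S4_def)

lemma coeff_sb_swap: "i \<le> 4 \<Longrightarrow> coeff (sb P (0,1,1,0)) i = coeff P (4 - i)"
  by (drule le4_cases, elim disjE; simp only: coeff_sb; simp add: S0_def S1_def S2_def S3_def S4_def)


context dvr
begin

lemma core1:
  assumes "in_O v b" "in_O v c" "in_O v d" "d - b*c \<noteq> 0"
  shows "\<exists>U V \<alpha>. GL2O U \<and> GL2O V \<and> (1,b,c,d) = mmul (mmul U (1,0,0,\<pi>^\<alpha>)) V"
proof -
  define \<delta> where "\<delta> = d - b*c"
  have dO: "in_O v \<delta>" "\<delta> \<noteq> 0" using assms \<delta>_def by (auto intro!: O_intros)
  define \<alpha> where "\<alpha> = nat (v \<delta>)"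
  have va: "v \<delta> = int \<alpha>" using dO \<alpha>_def by (simp add: in_O_def vge_def)
  define w where "w = \<delta> / \<pi>^\<alpha>"
  have p0: "\<pi>^\<alpha> \<noteq> 0" using pi0 by simp
  have vw: "v w = 0" unfolding w_def using vdiv[OF dO(2) p0] va by simp
  have w0: "w \<noteq> 0" using w_def dO p0 by simp
  have wu: "in_O v w" "\<not> vge v 1 w" using vw w0 by (auto simp: in_O_def vge_def)
  have e: "w * \<pi>^\<alpha> = \<delta>" unfolding w_def using p0 by simp
  have "(1,b,c,d) = mmul (mmul (1,0,c,w) (1,0,0,\<pi>^\<alpha>)) (1,b,0,1)"
    using e \<delta>_def by (simp add: algebra_simps)
  moreover have "GL2O (1,0,c,w)" using wu assms by (simp add: O_intros)
  moreover have "GL2O (1,b,0,1)" using assms by (simp add: O_intros vge_def)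
  ultimately show ?thesis by blast
qed

lemma swap_GL2O: "GL2O (0,1,1,0)" by (simp add: O_intros vge_def)

lemma core:
  assumes int: "in_O v A" "in_O v B" "in_O v C" "in_O v D" and one: "1 \<in> {A,B,C,D}" and det: "A*D - B*C \<noteq> 0"
  shows "\<exists>U V \<alpha>. GL2O U \<and> GL2O V \<and> (A,B,C,D) = mmul (mmul U (1,0,0,\<pi>^\<alpha>)) V"
proof -
  have sw: "mmul (0,1,1,0) (0,1,1,0) = (1,0,0,1::'a)" by simp
  have id_l: "mmul (1,0,0,1) X = X" and id_r: "mmul X (1,0,0,1) = X" for X :: "'a mat2" by (cases X; simp)+
  from one have "A = 1 \<or> B = 1 \<or> C = 1 \<or> D = 1" by auto
  then show ?thesis
  proof (elim disjE)
    assume a: "A = 1"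
    have "D - B*C \<noteq> 0" using det a by simp
    then obtain U V \<alpha> where u: "GL2O U" "GL2O V" "(1,B,C,D) = mmul (mmul U (1,0,0,\<pi>^\<alpha>)) V"
      using core1[of B C D] int by blast
    then show ?thesis using a by blast
  next
    assume b: "B = 1"
    have "C - A*D \<noteq> 0" using det b by (simp add: algebra_simps)
    then obtain U V \<alpha> where u: "GL2O U" "GL2O V" "(1,A,D,C) = mmul (mmul U (1,0,0,\<pi>^\<alpha>)) V"
      using core1[of A D C] int by blast
    have "(A,B,C,D) = mmul (1,A,D,C) (0,1,1,0)" using b by simp
    also have "\<dots> = mmul (mmul U (1,0,0,\<pi>^\<alpha>)) (mmul V (0,1,1,0))" using u(3) mmul_assoc by metis
    finally show ?thesis using u GL2O_mmul swap_GL2O by blast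
  next
    assume c: "C = 1"
    have "B - D*A \<noteq> 0" using det c by (simp add: algebra_simps)
    then obtain U V \<alpha> where u: "GL2O U" "GL2O V" "(1,D,A,B) = mmul (mmul U (1,0,0,\<pi>^\<alpha>)) V"
      using core1[of D A B] int by blast
    have "(A,B,C,D) = mmul (0,1,1,0) (1,D,A,B)" using c by simp
    also have "\<dots> = mmul (mmul (mmul (0,1,1,0) U) (1,0,0,\<pi>^\<alpha>)) V" using u(3) mmul_assoc by metis
    finally show ?thesis using u GL2O_mmul swap_GL2O by blast
  next
    assume d: "D = 1"
    have "A - C*B \<noteq> 0" using det d by (simp add: algebra_simps)
    then obtain U V \<alpha> where u: "GL2O U" "GL2O V" "(1,C,B,A) = mmul (mmul U (1,0,0,\<pi>^\<alpha>)) V"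
      using core1[of C B A] int by blast
    have "(A,B,C,D) = mmul (mmul (0,1,1,0) (1,C,B,A)) (0,1,1,0)" using d by simp
    also have "\<dots> = mmul (mmul (mmul (0,1,1,0) U) (1,0,0,\<pi>^\<alpha>)) (mmul V (0,1,1,0))" using u(3) mmul_assoc by metis
    finally show ?thesis using u GL2O_mmul swap_GL2O by blast
  qed
qed

lemma smith:
  assumes det: "mdet S \<noteq> 0"
  shows "\<exists>l U V \<alpha>. l \<noteq> 0 \<and> GL2O U \<and> GL2O V \<and> S = mscale l (mmul (mmul U (1,0,0,\<pi>^\<alpha>)) V)"
proof -
  obtain A B C D where S: "S = (A,B,C,D)" by (cases S) auto
  define X where "X = {x. x \<in> {A,B,C,D} \<and> x \<noteq> 0}"
  have fin: "finite X" unfolding X_def by simp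
  have ne: "X \<noteq> {}" using det S X_def by auto
  define m where "m = Min (v ` X)"
  have "m \<in> v ` X" unfolding m_def using fin ne by simp
  then obtain E where E: "E \<in> X" "v E = m" by auto
  have Emin: "v E \<le> v y" if "y \<in> X" for y using that fin E(2) m_def by simp
  have E0: "E \<noteq> 0" using E X_def by simp
  have intq: "in_O v (x / E)" if "x \<in> {A,B,C,D}" for x
  proof (cases "x = 0")
    case False
    then have "x \<in> X" using that X_def by simp
    then have "v x - v E \<ge> 0" using Emin by simp
    then show ?thesis using vdiv[OF False E0] by (simp add: in_O_def vge_def)
  qed (simp add: in_O_def vge_def)
  have one: "1 \<in> {A/E, B/E, C/E, D/E}" using E E0 X_def by auto
  have dq: "(A/E)*(D/E) - (B/E)*(C/E) \<noteq> 0"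
  proof -
    have "(A/E)*(D/E) - (B/E)*(C/E) = (A*D - B*C) / (E*E)" using E0 by (simp add: field_simps)
    then show ?thesis using det S E0 by simp
  qed
  obtain U V \<alpha> where u: "GL2O U" "GL2O V" "(A/E, B/E, C/E, D/E) = mmul (mmul U (1,0,0,\<pi>^\<alpha>)) V"
    using core[OF intq intq intq intq one dq] by blast
  have "S = mscale E (A/E, B/E, C/E, D/E)" using S E0 by simp
  then show ?thesis using u E0 by metis
qed

end


lemma mdet_mscale: "mdet (mscale l S) = l^2 * mdet S"
  by (cases S) (simp add: algebra_simps power2_eq_square)

context dvr
begin

lemma vgeP_all4: "(\<forall>i\<le>4. vge v n (coeff P i)) \<Longrightarrow> degree P \<le> 4 \<Longrightarrow> vgeP n P"
  unfolding vgeP_def by (metis coeff_eq_0 le_less_linear order.trans vge_0)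

lemma nonmin_data:
  assumes int: "vgeP 0 F" and dg: "degree F \<le> 4" and nd: "bq_disc F \<noteq> 0" and nv2: "\<not> vgeP 2 F"
    and Gi: "vgeP 0 G" and eq: "bq_equiv F G" and lt: "v (bq_disc G) < v (bq_disc F)"
  shows "\<exists>U \<alpha> m. GL2O U \<and> (1::int) \<le> \<alpha> \<and> \<alpha> + 1 \<le> m \<and> (\<forall>i\<le>4. vge v (2*m - \<alpha> * int i) (coeff (sb F U) i))"
proof -
  obtain \<mu> m11 m12 m21 m22 where e: "\<mu> \<noteq> 0" "m11 * m22 - m12 * m21 \<noteq> 0"
     "G = smult (\<mu>^2) (bq_subst F m11 m12 m21 m22)" using eq unfolding bq_equiv_def by blast
  define S where "S = (m11, m21, m12, m22)"
  have GS: "G = smult (\<mu>^2) (sb F S)" using e(3) S_def by simp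
  have dS: "mdet S \<noteq> 0" using e(2) S_def by (simp add: mult.commute)
  have md0: "\<mu> * mdet S \<noteq> 0" using e(1) dS by simp
  have "bq_disc G = (\<mu> * mdet S)^12 * bq_disc F" unfolding GS using equiv_disc[OF e(1) dS] .
  then have "v (bq_disc G) = 12 * v (\<mu> * mdet S) + v (bq_disc F)"
    using vmult[of "(\<mu> * mdet S)^12" "bq_disc F"] vpow[OF md0, of 12] nd md0 by simp
  then have neg: "v (\<mu> * mdet S) < 0" using lt by simp
  obtain l U V \<alpha>0 where sm: "l \<noteq> 0" "GL2O U" "GL2O V" "S = mscale l (mmul (mmul U (1,0,0,\<pi>^\<alpha>0)) V)"
    using smith[OF dS] by blast
  define D :: "'a mat2" where "D = (1,0,0,\<pi>^\<alpha>0)"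
  define \<mu>1 where "\<mu>1 = \<mu> * l^2"
  have m10: "\<mu>1 \<noteq> 0" using e(1) sm(1) \<mu>1_def by simp
  have "sb F S = smult (l^4) (sb (sb (sb F U) D) V)" unfolding sm(4) sb_scale D_def sb_comp by simp
  then have G2: "G = sb (smult (\<mu>1^2) (sb (sb F U) D)) V" unfolding GS \<mu>1_def sb_smult
    by (simp add: power_mult_distrib power2_eq_square power4_eq_xxxx mult_ac)
  define H where "H = smult (\<mu>1^2) (sb (sb F U) D)"
  have dH: "degree H \<le> 4" unfolding H_def using degree_sb[of "sb F U" D] by simp
  have "sb G (minv V) = H" unfolding G2 H_def[symmetric] using sb_inv[OF dH GL2O_det0[OF sm(3)]] .
  then have Hi: "vgeP 0 H" using vgeP_sb_GL2O[OF GL2O_minv[OF sm(3)] Gi] by simp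
  have dU: "v (mdet U) = 0" "v (mdet V) = 0" using GL2O_det[OF sm(2)] GL2O_det[OF sm(3)] unit_v0 by blast+
  have "mdet S = l^2 * (mdet U * \<pi>^\<alpha>0 * mdet V)" unfolding sm(4) mdet_mscale mdet_mmul by simp
  then have "v (mdet S) = 2 * v l + int \<alpha>0"
    using vmult vpow sm(1) GL2O_det0[OF sm(2)] GL2O_det0[OF sm(3)] pi0 dU
    by (simp add: vmult vpow)
  then have neg2: "v \<mu>1 + int \<alpha>0 < 0" using neg vmult[OF e(1) dS] vmult[of \<mu> "l^2"] vpow[OF sm(1), of 2] e(1) sm(1) \<mu>1_def
    by simp
  define m where "m = - v \<mu>1"
  define U' where "U' = mmul U (0,1,1,0)"
  have gU': "GL2O U'" unfolding U'_def using GL2O_mmul[OF sm(2) swap_GL2O] .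
  have bnd: "vge v (2*m - int \<alpha>0 * int i) (coeff (sb F U') i)" if i4: "i \<le> 4" for i
  proof -
    have cP: "coeff (sb F U') i = coeff (sb F U) (4 - i)" unfolding U'_def sb_comp[symmetric] using coeff_sb_swap[OF i4] .
    have "coeff H (4 - i) = \<mu>1^2 * (coeff (sb F U) (4 - i) * (\<pi>^\<alpha>0)^(4 - (4 - i)))"
      unfolding H_def D_def using coeff_sb_diag[of "4 - i" "sb F U" "\<pi>^\<alpha>0"] by simp
    also have "\<dots> = \<mu>1^2 * (coeff (sb F U') i * \<pi>^(\<alpha>0 * i))" using cP i4 by (simp add: power_mult)
    finally have cH: "coeff H (4 - i) = \<mu>1^2 * (coeff (sb F U') i * \<pi>^(\<alpha>0 * i))" .
    show ?thesis
    proof (cases "coeff (sb F U') i = 0")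
      case False
      have "vge v 0 (coeff H (4 - i))" using Hi vgeP_def by blast
      moreover have "coeff H (4 - i) \<noteq> 0" using cH False m10 pi0 by simp
      ultimately have "0 \<le> v (\<mu>1^2 * (coeff (sb F U') i * \<pi>^(\<alpha>0 * i)))" unfolding cH using pi0 by (simp add: vge_def)
      also have "\<dots> = 2 * v \<mu>1 + v (coeff (sb F U') i) + int \<alpha>0 * int i"
        using vmult vpow m10 False pi0 by (simp add: vmult vpow)
      finally show ?thesis unfolding m_def vge_def by simp
    qed (simp add: vge_def)
  qed
  have a1: "(1::int) \<le> int \<alpha>0"
  proof (rule ccontr)
    assume "\<not> (1::int) \<le> int \<alpha>0"
    then have a0: "\<alpha>0 = 0" by simp
    have "\<forall>i\<le>4. vge v 2 (coeff (sb F U') i)"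
    proof (intro allI impI)
      fix i :: nat assume "i \<le> 4"
      then have "vge v (2*m) (coeff (sb F U') i)" using bnd a0 by simp
      moreover have "2 \<le> 2*m" using neg2 a0 m_def by simp
      ultimately show "vge v 2 (coeff (sb F U') i)" using vge_mono by blast
    qed
    then have "vgeP 2 (sb F U')" using vgeP_all4 degree_sb by blast
    then have "vgeP 2 F" using vgeP_sb_iff[OF gU' dg] by simp
    then show False using nv2 by simp
  qed
  have "int \<alpha>0 + 1 \<le> m" using neg2 m_def by simp
  then show ?thesis using gU' a1 bnd by blast
qed

end


context dvr
begin

lemma bqval_iff:
  assumes F0: "F \<noteq> 0" and dg: "degree F \<le> 4"
  shows "vgeP n F \<longleftrightarrow> n \<le> bq_val v F"
proof -
  define X where "X = {coeff F i | i. i \<le> 4 \<and> coeff F i \<noteq> 0}"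
  have fin: "finite X" unfolding X_def by simp
  have ne: "X \<noteq> {}"
  proof -
    obtain i where "coeff F i \<noteq> 0" using F0 by (metis leading_coeff_0_iff)
    moreover have "i \<le> 4" using calculation dg le_degree by fastforce
    ultimately show ?thesis unfolding X_def by blast
  qed
  have bv: "bq_val v F = Min (v ` X)" unfolding bq_val_def X_def by simp
  show ?thesis
  proof
    assume a: "vgeP n F"
    have "\<forall>x\<in>X. n \<le> v x" using a unfolding X_def vgeP_def vge_def by auto
    then show "n \<le> bq_val v F" unfolding bv using fin ne by simp
  next
    assume a: "n \<le> bq_val v F"
    show "vgeP n F" unfolding vgeP_def
    proof
      fix i
      show "vge v n (coeff F i)"
      proof (cases "i \<le> 4 \<and> coeff F i \<noteq> 0")
        case True
        then have "coeff F i \<in> X" unfolding X_def by blast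
        then have "Min (v ` X) \<le> v (coeff F i)" using fin by simp
        then show ?thesis using a bv by (simp add: vge_def)
      next
        case False
        then show ?thesis using dg coeff_eq_0[of F i] by (auto simp: vge_def)
      qed
    qed
  qed
qed

lemma bqF1_eq: "bq_val v F = int w \<Longrightarrow> bq_F1 v \<pi> F = smult (inverse (\<pi>^w)) F"
  unfolding bq_F1_def by (simp add: power_int_minus)

lemma step_unfold:
  assumes "bq_step v \<pi> F G"
  shows "\<exists>M. GL2O M \<and> bq_root_mult_ge v (sb (bq_F1 v \<pi> F) M) 0 1 3 \<and>
     G = smult (inverse (\<pi>^2)) (sb (sb F M) (\<pi>,0,0,1))"
proof -
  obtain m11 m12 m21 m22 where e: "GL2_O v m11 m12 m21 m22"
    "bq_root_mult_ge v (bq_subst (bq_F1 v \<pi> F) m11 m12 m21 m22) 0 1 3"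
    "G = smult (inverse (\<pi>^2)) (bq_subst (bq_subst F m11 m12 m21 m22) \<pi> 0 0 1)"
    using assms unfolding bq_step_def by blast
  show ?thesis
    apply (rule exI[of _ "(m11, m21, m12, m22)"])
    using e GL2O_iff by simp
qed

lemma root01_coeffs:
  assumes "bq_root_mult_ge v P 0 1 3" "degree P \<le> 4"
  shows "vge v 1 (coeff P 0) \<and> vge v 1 (coeff P 1) \<and> vge v 1 (coeff P 2)"
proof -
  obtain h0 h1 where "vgeP 1 (P - [:-0, 1:]^3 * [:h0, h1:])" using rootD[OF assms(1)] by blast
  then show ?thesis unfolding diff_lin3[OF assms(2)] vgeP_qpoly by simp
qed

end


lemma sb_zero: "sb 0 S = 0"
  by (cases S) (simp add: bq_subst_def)

lemma sb_nonzero: "degree X \<le> 4 \<Longrightarrow> mdet S \<noteq> 0 \<Longrightarrow> X \<noteq> 0 \<Longrightarrow> sb X S \<noteq> 0"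
  using sb_inv sb_zero by metis

context dvr
begin

lemma align:
  assumes Pi: "vgeP 0 P" and dP: "degree P \<le> 4" and nP: "\<not> vgeP 1 P"
    and p: "vge v 1 (coeff P 0)" "vge v 1 (coeff P 1)" "vge v 1 (coeff P 2)"
    and g: "GL2O (A,B,C,D)"
    and c: "vge v 1 (coeff (sb P (A,B,C,D)) 0)" "vge v 1 (coeff (sb P (A,B,C,D)) 1)"
  shows "vge v 1 B"
proof (rule ccontr)
  assume nB: "\<not> vge v 1 B"
  define p0 where "p0 = coeff P 0"
  define p1 where "p1 = coeff P 1"
  define p2 where "p2 = coeff P 2"
  define p3 where "p3 = coeff P 3"
  define p4 where "p4 = coeff P 4"
  have ent: "in_O v A" "in_O v B" "in_O v C" "in_O v D" "in_O v (A*D - B*C)" "\<not> vge v 1 (A*D - B*C)"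
    using g by (auto intro!: O_intros)
  have pO: "vge v 0 p3" "vge v 0 p4" using Pi p3_def p4_def vgeP_def by auto
  have p1': "vge v 1 p0" "vge v 1 p1" "vge v 1 p2" using p p0_def p1_def p2_def by auto
  have c0: "vge v 1 (p0*D^4 + p1*B*D^3 + p2*B^2*D^2 + p3*B^3*D + p4*B^4)"
    using c(1) unfolding coeff_sb S0_def p0_def p1_def p2_def p3_def p4_def .
  have c1: "vge v 1 (p0*4*C*D^3 + p1*(A*D^3 + 3*B*C*D^2) + p2*(2*A*B*D^2 + 2*B^2*C*D) + p3*(3*A*B^2*D + B^3*C) + p4*4*A*B^3)"
    using c(2) unfolding coeff_sb S1_def p0_def p1_def p2_def p3_def p4_def .
  define q where "q = p3*D + p4*B"
  define X where "X = 3*p3*A*D + p3*B*C + 4*p4*A*B"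
  have entv: "vge v 0 A" "vge v 0 B" "vge v 0 C" "vge v 0 D" using ent by (auto simp: in_O_def)
  have "B^3 * q = (p0*D^4 + p1*B*D^3 + p2*B^2*D^2 + p3*B^3*D + p4*B^4) - (p0*D^4 + p1*B*D^3 + p2*B^2*D^2)"
    unfolding q_def by algebra
  moreover have "vge v 1 ((p0*D^4 + p1*B*D^3 + p2*B^2*D^2 + p3*B^3*D + p4*B^4) - (p0*D^4 + p1*B*D^3 + p2*B^2*D^2))"
    by (insert c0 p1' entv, rule vmonoI, (assumption | rule vE)+, simp)
  ultimately have "vge v 1 (B^3 * q)" by metis
  then have q1: "vge v 1 q" using unit_cancel unit_pow[OF ent(2) nB, of 3] by blast
  have "B^2 * X = (p0*4*C*D^3 + p1*(A*D^3 + 3*B*C*D^2) + p2*(2*A*B*D^2 + 2*B^2*C*D) + p3*(3*A*B^2*D + B^3*C) + p4*4*A*B^3) - (p0*4*C*D^3 + p1*(A*D^3 + 3*B*C*D^2) + p2*(2*A*B*D^2 + 2*B^2*C*D))"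
    unfolding X_def by algebra
  moreover have "vge v 1 ((p0*4*C*D^3 + p1*(A*D^3 + 3*B*C*D^2) + p2*(2*A*B*D^2 + 2*B^2*C*D) + p3*(3*A*B^2*D + B^3*C) + p4*4*A*B^3) - (p0*4*C*D^3 + p1*(A*D^3 + 3*B*C*D^2) + p2*(2*A*B*D^2 + 2*B^2*C*D)))"
    by (insert c1 p1' entv, rule vmonoI, (assumption | rule vE)+, simp)
  ultimately have "vge v 1 (B^2 * X)" by metis
  then have X1: "vge v 1 X" using unit_cancel unit_pow[OF ent(2) nB, of 2] by blast
  have "(A*D - B*C) * p3 = 4*A*q - X" unfolding q_def X_def by algebra
  moreover have "vge v 1 (4*A*q - X)" by (insert q1 X1 entv, rule vmonoI, (assumption | rule vE)+, simp)
  ultimately have "vge v 1 ((A*D - B*C) * p3)" by metis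
  then have p31: "vge v 1 p3" using unit_cancel[OF ent(5,6)] by blast
  have "B * p4 = q - p3*D" unfolding q_def by simp
  moreover have "vge v 1 (q - p3*D)" by (insert q1 p31 entv, rule vmonoI, (assumption | rule vE)+, simp)
  ultimately have "vge v 1 (B * p4)" by metis
  then have p41: "vge v 1 p4" using unit_cancel[OF ent(2) nB] by blast
  have "\<forall>i\<le>4. vge v 1 (coeff P i)"
  proof (intro allI impI)
    fix i :: nat assume "i \<le> 4"
    then show "vge v 1 (coeff P i)" using p1' p31 p41 p0_def p1_def p2_def p3_def p4_def
      by (elim le4_cases[elim_format] disjE) auto
  qed
  then have "vgeP 1 P" using vgeP_all4 dP by blast
  then show False using nP by simp
qed

end


context dvr
begin

lemma frame_step:
  assumes int: "vgeP 0 F" and dg: "degree F \<le> 4" and F0: "F \<noteq> 0" and bv: "bq_val v F = int w" and w1: "w \<le> 1"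
    and gU: "GL2O U" and bnd: "\<forall>i\<le>4. vge v (\<beta> i) (coeff (sb F U) i)"
    and b0: "\<forall>i\<le>4. 0 \<le> \<beta> i" and b2: "\<forall>i\<le>2. 2 \<le> \<beta> i"
    and st: "bq_step v \<pi> F G"
  shows "vgeP 0 G \<and> degree G \<le> 4 \<and> G \<noteq> 0 \<and> (\<exists>U'. GL2O U' \<and> (\<forall>i\<le>4. vge v (\<beta> i + int i - 2) (coeff (sb G U') i)))"
proof -
  obtain M where M: "GL2O M" "bq_root_mult_ge v (sb (bq_F1 v \<pi> F) M) 0 1 3"
     "G = smult (inverse (\<pi>^2)) (sb (sb F M) (\<pi>,0,0,1))" using step_unfold[OF st] by blast
  define F1 where "F1 = bq_F1 v \<pi> F"
  have F1e: "F1 = smult (inverse (\<pi>^w)) F" using bqF1_eq[OF bv] F1_def by simp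
  have FF1: "F = smult (\<pi>^w) F1" unfolding F1e using pi0 by simp
  have dF1: "degree F1 \<le> 4" using dg F1e by simp
  have Fw: "vgeP (int w) F" using bqval_iff[OF F0 dg] bv by simp
  have F1i: "vgeP 0 F1" unfolding vgeP_def
  proof
    fix i
    have "vge v (0 + int w) (\<pi>^w * coeff F1 i)" using Fw FF1 vgeP_def by simp
    then show "vge v 0 (coeff F1 i)" using vge_times_pi_pow by blast
  qed
  define P where "P = sb F1 U"
  have dP: "degree P \<le> 4" using degree_sb P_def by simp
  have Pi: "vgeP 0 P" using vgeP_sb_GL2O[OF gU F1i] P_def by simp
  have FUP: "sb F U = smult (\<pi>^w) P" unfolding P_def FF1 sb_smult ..
  have p12: "vge v 1 (coeff P i)" if "i \<le> 2" for i
  proof -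
    have "vge v (\<beta> i) (\<pi>^w * coeff P i)" using bnd that FUP by simp
    moreover have "1 + int w \<le> \<beta> i" using b2 that w1 by force
    ultimately have "vge v (1 + int w) (\<pi>^w * coeff P i)" using vge_mono by blast
    then show ?thesis using vge_times_pi_pow by blast
  qed
  have nP: "\<not> vgeP 1 P"
  proof
    assume "vgeP 1 P"
    then have "vgeP 1 F1" using vgeP_sb_iff[OF gU dF1] P_def by simp
    then have "vgeP (1 + int w) F" unfolding vgeP_def FF1 using vge_times_pi_pow by simp
    then have "1 + int w \<le> bq_val v F" using bqval_iff[OF F0 dg] by blast
    then show False using bv by simp
  qed
  define L where "L = mmul (minv U) M"
  have gL: "GL2O L" unfolding L_def using GL2O_mmul[OF GL2O_minv[OF gU] M(1)] .
  have id_l: "mmul (1,0,0,1) X = X" for X :: "'a mat2" by (cases X; simp)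
  have UL: "mmul U L = M" unfolding L_def mmul_assoc[symmetric] minv_r[OF GL2O_det0[OF gU]] id_l ..
  have F1M: "sb F1 M = sb P L" unfolding P_def sb_comp UL ..
  obtain A B C D where Le: "L = (A,B,C,D)" by (cases L) auto
  have c012: "vge v 1 (coeff (sb P L) 0) \<and> vge v 1 (coeff (sb P L) 1) \<and> vge v 1 (coeff (sb P L) 2)"
    using root01_coeffs[OF M(2)[folded F1_def, unfolded F1M] degree_sb] .
  have B1: "vge v 1 B" using align[OF Pi dP nP p12[of 0] p12[of 1] p12[of 2] gL[unfolded Le]] c012 Le by simp
  define B' where "B' = B / \<pi>"
  have BB: "B = \<pi> * B'" unfolding B'_def using pi0 by simp
  have B'O: "in_O v B'" using B1 BB vge_times_pi[of 0 B'] by (simp add: in_O_def)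
  have entL: "in_O v A" "in_O v C" "in_O v D" "\<not> vge v 1 (A*D - B*C)" using gL Le by auto
  define L' where "L' = (A, B', \<pi>*C, D)"
  have gL': "GL2O L'" unfolding L'_def using entL B'O BB by (simp add: O_intros algebra_simps)
  have comm: "mmul L (\<pi>,0,0,1) = mmul (\<pi>,0,0,1) L'" unfolding Le L'_def BB by (simp add: algebra_simps)
  define Dp :: "'a mat2" where "Dp = (\<pi>,0,0,1)"
  define G0 where "G0 = smult (inverse (\<pi>^2)) (sb (sb F U) Dp)"
  have "sb (sb F M) Dp = sb (sb (sb F U) Dp) L'"
    unfolding sb_comp UL[symmetric] mmul_assoc Dp_def comm ..
  then have GG0: "G = sb G0 L'" unfolding M(3) G0_def sb_smult Dp_def by simp
  have dG0: "degree G0 \<le> 4" unfolding G0_def using degree_sb[of "sb F U" Dp] by simp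
  have cG0: "coeff G0 i = inverse (\<pi>^2) * (coeff (sb F U) i * \<pi>^i)" if "i \<le> 4" for i
    by (simp only: G0_def Dp_def coeff_smult coeff_sb_diagx[OF that])
  have bG0: "vge v (\<beta> i + int i - 2) (coeff G0 i)" if i4: "i \<le> 4" for i
  proof -
    have "vge v (\<beta> i + int i) (\<pi>^i * coeff (sb F U) i)" using bnd i4 vge_times_pi_pow by simp
    moreover have "\<pi>^2 * coeff G0 i = \<pi>^i * coeff (sb F U) i" using cG0[OF i4] pi0 by (simp add: field_simps)
    ultimately have "vge v ((\<beta> i + int i - 2) + int 2) (\<pi>^2 * coeff G0 i)" by simp
    then show ?thesis using vge_times_pi_pow by blast
  qed
  have G0i: "vgeP 0 G0"
  proof (rule vgeP_all4[OF _ dG0], intro allI impI)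
    fix i :: nat assume i4: "i \<le> 4"
    have "0 \<le> \<beta> i + int i - 2"
    proof (cases "i \<le> 2")
      case True then show ?thesis using b2 by force
    next
      case False then show ?thesis using b0 i4 by force
    qed
    then show "vge v 0 (coeff G0 i)" using bG0[OF i4] vge_mono by blast
  qed
  have Gi: "vgeP 0 G" unfolding GG0 using vgeP_sb_GL2O[OF gL' G0i] .
  have G00: "G0 \<noteq> 0"
  proof -
    have "sb F U \<noteq> 0" using sb_nonzero[OF dg GL2O_det0[OF gU] F0] .
    moreover have "mdet Dp \<noteq> 0" using pi0 Dp_def by simp
    ultimately have "sb (sb F U) Dp \<noteq> 0" using sb_nonzero[OF degree_sb] by blast
    then show ?thesis unfolding G0_def using pi0 by simp
  qed
  have Gn0: "G \<noteq> 0" unfolding GG0 using sb_nonzero[OF dG0 GL2O_det0[OF gL'] G00] .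
  have "sb G (minv L') = G0" unfolding GG0 using sb_inv[OF dG0 GL2O_det0[OF gL']] .
  then have "\<forall>i\<le>4. vge v (\<beta> i + int i - 2) (coeff (sb G (minv L')) i)" using bG0 by simp
  then show ?thesis using Gi Gn0 degree_sb GG0 GL2O_minv[OF gL'] by metis
qed

end


context dvr
begin

lemma data_bounds:
  assumes int: "vgeP 0 F" and gU: "GL2O U" and a: "(1::int) \<le> \<alpha>" "\<alpha> + 1 \<le> m"
    and bnd: "\<forall>i\<le>4. vge v (2*m - \<alpha> * int i) (coeff (sb F U) i)"
  shows "\<forall>i\<le>4. vge v (max 0 (2*m - \<alpha> * int i)) (coeff (sb F U) i)"
proof (intro allI impI)
  fix i :: nat assume i4: "i \<le> 4"
  have "vge v 0 (coeff (sb F U) i)" using vgeP_sb_GL2O[OF gU int] vgeP_def by blast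
  then show "vge v (max 0 (2*m - \<alpha> * int i)) (coeff (sb F U) i)" using bnd i4 by (simp add: max_def)
qed

lemma root_from_data:
  assumes int: "vgeP 0 F" and dg: "degree F \<le> 4" and F0: "F \<noteq> 0" and bv: "bq_val v F = int w" and w1: "w \<le> 1"
    and gU: "GL2O U" and bnd: "\<forall>i\<le>2. vge v 2 (coeff (sb F U) i)"
  shows "\<exists>x0 z0. bq_root_mult_ge v (bq_F1 v \<pi> F) x0 z0 3"
proof -
  define F1 where "F1 = bq_F1 v \<pi> F"
  have F1e: "F1 = smult (inverse (\<pi>^w)) F" using bqF1_eq[OF bv] F1_def by simp
  have FF1: "F = smult (\<pi>^w) F1" unfolding F1e using pi0 by simp
  have dF1: "degree F1 \<le> 4" using dg F1e by simp
  have Fw: "vgeP (int w) F" using bqval_iff[OF F0 dg] bv by simp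
  have F1i: "vgeP 0 F1" unfolding vgeP_def
  proof
    fix i
    have "vge v (0 + int w) (\<pi>^w * coeff F1 i)" using Fw FF1 vgeP_def by simp
    then show "vge v 0 (coeff F1 i)" using vge_times_pi_pow by blast
  qed
  define P where "P = sb F1 U"
  have dP: "degree P \<le> 4" using degree_sb P_def by simp
  have Pi: "vgeP 0 P" using vgeP_sb_GL2O[OF gU F1i] P_def by simp
  have FUP: "sb F U = smult (\<pi>^w) P" unfolding P_def FF1 sb_smult ..
  have p12: "vge v 1 (coeff P i)" if "i \<le> 2" for i
  proof -
    have "vge v 2 (\<pi>^w * coeff P i)" using bnd that FUP by simp
    then have "vge v (1 + int w) (\<pi>^w * coeff P i)" using vge_mono w1 by (metis add.commute add_le_cancel_left one_add_one of_nat_le_1_iff)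
    then show ?thesis using vge_times_pi_pow by blast
  qed
  have "vgeP 1 (P - [:-0, 1:]^3 * [:coeff P 3, coeff P 4:])"
    unfolding diff_lin3[OF dP] vgeP_qpoly using p12[of 0] p12[of 1] p12[of 2] by simp
  then have "bq_root_mult_ge v P 0 1 3"
    by (rule rootI[rotated 5]) (use Pi in \<open>simp_all add: O_intros vge_def in_O_def vgeP_def\<close>)
  from root_transform[OF this GL2O_minv[OF gU]]
  have "\<exists>x0 z0. bq_root_mult_ge v (sb P (minv U)) x0 z0 3" .
  moreover have "sb P (minv U) = F1" unfolding P_def using sb_inv[OF dF1 GL2O_det0[OF gU]] .
  ultimately show ?thesis using F1_def by simp
qed

lemma G_integral_from:
  assumes "vgeP 0 P" "vge v 2 (coeff P 0)" "vge v 1 (coeff P 1)"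
  shows "vgeP 0 (smult (inverse (\<pi>^2)) (sb P (\<pi>,0,0,1)))"
proof (rule vgeP_all4[OF _ _], intro allI impI)
  fix i :: nat assume i4: "i \<le> 4"
  have c: "\<pi>^2 * coeff (smult (inverse (\<pi>^2)) (sb P (\<pi>,0,0,1))) i = \<pi>^i * coeff P i"
    unfolding coeff_smult coeff_sb_diagx[OF i4] using pi0 by (simp add: field_simps)
  have "vge v (int i) (\<pi>^i * coeff P i)"
  proof -
    consider "i = 0" | "i = 1" | "i \<ge> 2" by linarith
    then show ?thesis
    proof cases
      case 1 then show ?thesis using assms(2) vge_mono[of 0 2 "coeff P 0"] by simp
    next
      case 2 then show ?thesis using vmulI[OF vge_pi assms(3), of 1] by simp
    next
      case 3
      have "vge v (0 + int i) (\<pi>^i * coeff P i)" using assms(1) vge_times_pi_pow vgeP_def by blast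
      then show ?thesis by simp
    qed
  qed
  moreover have "int i \<ge> 0 + int 2 \<or> i < 2" by linarith
  ultimately have "vge v (0 + int 2) (\<pi>^2 * coeff (smult (inverse (\<pi>^2)) (sb P (\<pi>,0,0,1))) i) \<or> i < 2"
    unfolding c using vge_mono by blast
  then show "vge v 0 (coeff (smult (inverse (\<pi>^2)) (sb P (\<pi>,0,0,1))) i)"
  proof
    assume "vge v (0 + int 2) (\<pi>^2 * coeff (smult (inverse (\<pi>^2)) (sb P (\<pi>,0,0,1))) i)"
    then show ?thesis using vge_times_pi_pow by blast
  next
    assume i2: "i < 2"
    then consider "i = 0" | "i = 1" by linarith
    then show ?thesis
    proof cases
      case 1
      then have "vge v (0 + int 2) (\<pi>^2 * coeff (smult (inverse (\<pi>^2)) (sb P (\<pi>,0,0,1))) i)"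
        unfolding c using assms(2) by simp
      then show ?thesis using vge_times_pi_pow by blast
    next
      case 2
      then have "vge v (0 + int 2) (\<pi>^2 * coeff (smult (inverse (\<pi>^2)) (sb P (\<pi>,0,0,1))) i)"
        unfolding c using assms(3) vge_times_pi[of 1 "coeff P 1"] by simp
      then show ?thesis using vge_times_pi_pow by blast
    qed
  qed
next
  show "degree (smult (inverse (\<pi>^2)) (sb P (\<pi>,0,0,1))) \<le> 4"
    using degree_sb[of P "(\<pi>,0,0,1)"] degree_smult_le[of "inverse (\<pi>^2)" "sb P (\<pi>,0,0,1)"] by linarith
qed

end


context dvr
begin

lemma nonmin_exists:
  assumes "bq_non_minimal v F"
  shows "\<exists>G. binary_quartic G \<and> bq_integral v G \<and> bq_equiv F G \<and> v (bq_disc G) < v (bq_disc F)"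
  using assms unfolding bq_non_minimal_def bq_minimal_def by (auto simp: not_le)

lemma main:
  assumes perfect: "residue_field_perfect v"
    and quartic: "binary_quartic F" and integral: "bq_integral v F"
    and nonsing: "bq_nonsingular F"
    and vF: "bq_val v F \<in> {0, 1}"
    and level_pos: "bq_level v F > 0"
    and char2: "residue_char_2 v \<Longrightarrow> bq_non_minimal v F"
  shows "(\<exists>x0 z0. bq_root_mult_ge v (bq_F1 v \<pi> F) x0 z0 3)
       \<and> (\<forall>G. bq_step v \<pi> F G \<longrightarrow>
            binary_quartic G \<and> bq_integral v G \<and> bq_equiv F G \<and> bq_level v G = bq_level v F)
       \<and> (bq_non_minimal v F \<longrightarrow>
            (\<forall>G. bq_step v \<pi> F G \<longrightarrow>
               bq_val v G \<ge> 2 \<or> (\<forall>H. bq_step v \<pi> G H \<longrightarrow> bq_val v H \<ge> 2)))"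
proof -
  have dg: "degree F \<le> 4" using quartic binary_quartic_def by blast
  have int: "vgeP 0 F" using integral bq_integral_vgeP by blast
  have nd: "bq_disc F \<noteq> 0" using nonsing bq_nonsingular_def by blast
  have F0: "F \<noteq> 0" using nd by (auto simp: bq_disc_def bq_a_def bq_b_def bq_c_def bq_d_def bq_e_def)
  obtain w :: nat where w: "bq_val v F = int w" "w \<le> 1" using vF by (metis insert_iff of_nat_0 of_nat_1 order_refl le0 singletonD)
  define F1 where "F1 = bq_F1 v \<pi> F"
  have F1e: "F1 = smult (inverse (\<pi>^w)) F" using bqF1_eq[OF w(1)] F1_def by simp
  have FF1: "F = smult (\<pi>^w) F1" unfolding F1e using pi0 by simp
  have dF1: "degree F1 \<le> 4" using dg F1e by simp
  have Fw: "vgeP (int w) F" using bqval_iff[OF F0 dg] w by simp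
  have F1i: "vgeP 0 F1" unfolding vgeP_def
  proof
    fix i
    have "vge v (0 + int w) (\<pi>^w * coeff F1 i)" using Fw FF1 vgeP_def by simp
    then show "vge v 0 (coeff F1 i)" using vge_times_pi_pow by blast
  qed
  have oH: "oddH F F1 w" unfolding oddH_def using int dg nd level_pos w FF1 F1i dF1 by auto
  have nv2: "\<not> vgeP 2 F" using bqval_iff[OF F0 dg] w by simp
  have data: "\<exists>U \<alpha> m. GL2O U \<and> (1::int) \<le> \<alpha> \<and> \<alpha> + 1 \<le> m \<and> (\<forall>i\<le>4. vge v (2*m - \<alpha> * int i) (coeff (sb F U) i))"
    if nm: "bq_non_minimal v F"
  proof -
    obtain G where G: "binary_quartic G" "bq_integral v G" "bq_equiv F G" "v (bq_disc G) < v (bq_disc F)"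
      using nonmin_exists[OF nm] by blast
    show ?thesis using nonmin_data[OF int dg nd nv2 _ G(3) G(4)] G(2) bq_integral_vgeP by blast
  qed
  have p1: "\<exists>x0 z0. bq_root_mult_ge v (bq_F1 v \<pi> F) x0 z0 3"
  proof (cases "residue_char_2 v")
    case False
    then have odd: "\<not> vge v 1 2" unfolding residue_char_2_def .
    show ?thesis using root_odd[OF oH odd] F1_def by simp
  next
    case True
    obtain U \<alpha> m where d: "GL2O U" "(1::int) \<le> \<alpha>" "\<alpha> + 1 \<le> m" "\<forall>i\<le>4. vge v (2*m - \<alpha> * int i) (coeff (sb F U) i)"
      using data[OF char2[OF True]] by blast
    have "\<forall>i\<le>2. vge v 2 (coeff (sb F U) i)"
    proof (intro allI impI)
      fix i :: nat assume "i \<le> 2"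
      moreover have "2 \<le> 2*m - \<alpha> * int i" if "i \<le> 2"
      proof -
        have "\<alpha> * int i \<le> \<alpha> * 2" using that d(2) by (intro mult_left_mono) auto
        then show ?thesis using d(3) by linarith
      qed
      ultimately show "vge v 2 (coeff (sb F U) i)" using d(4) vge_mono by force
    qed
    then show ?thesis using root_from_data[OF int dg F0 w d(1)] by blast
  qed
  have p2: "binary_quartic G \<and> bq_integral v G \<and> bq_equiv F G \<and> bq_level v G = bq_level v F"
    if st: "bq_step v \<pi> F G" for G
  proof -
    obtain M where M: "GL2O M" "bq_root_mult_ge v (sb F1 M) 0 1 3"
       "G = smult (inverse (\<pi>^2)) (sb (sb F M) (\<pi>,0,0,1))" using step_unfold[OF st] F1_def by blast
    have dG: "degree G \<le> 4" unfolding M(3) using degree_sb[of "sb F M" "(\<pi>,0,0,1)"]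
      degree_smult_le[of "inverse (\<pi>^2)" "sb (sb F M) (\<pi>,0,0,1)"] by linarith
    define S where "S = mmul M (\<pi>,0,0,1)"
    have dS: "mdet S \<noteq> 0" unfolding S_def mdet_mmul using GL2O_det0[OF M(1)] pi0 by simp
    have GS: "G = smult ((inverse \<pi>)^2) (sb F S)" unfolding M(3) S_def sb_comp by (simp add: power_inverse)
    have eqv: "bq_equiv F G"
    proof -
      obtain s11 s21 s12 s22 where Se: "S = (s11, s21, s12, s22)" by (cases S) auto
      show ?thesis unfolding bq_equiv_def
        apply (rule exI[of _ "inverse \<pi>"], rule exI[of _ s11], rule exI[of _ s12], rule exI[of _ s21], rule exI[of _ s22])
        using GS Se dS pi0 by (simp add: mult.commute)
    qed
    have "bq_level v G = bq_level v F + v (inverse \<pi> * mdet S)"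
      unfolding GS using equiv_level[OF _ dS nd] pi0 by simp
    moreover have "v (inverse \<pi> * mdet S) = 0"
    proof -
      have "inverse \<pi> * mdet S = mdet M" unfolding S_def mdet_mmul using pi0 by (cases M) (simp add: field_simps)
      then show ?thesis using GL2O_det[OF M(1)] unit_v0 by auto
    qed
    ultimately have lev: "bq_level v G = bq_level v F" by simp
    have FMi: "vgeP 0 (sb F M)" using vgeP_sb_GL2O[OF M(1) int] .
    have c012: "vge v 1 (coeff (sb F1 M) 0) \<and> vge v 1 (coeff (sb F1 M) 1) \<and> vge v 1 (coeff (sb F1 M) 2)"
      using root01_coeffs[OF M(2) degree_sb] .
    have FM: "sb F M = smult (\<pi>^w) (sb F1 M)" unfolding FF1 sb_smult ..
    have Gi: "vgeP 0 G"
    proof (cases "w = 1")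
      case True
      have "vge v 2 (coeff (sb F M) 0)" "vge v 1 (coeff (sb F M) 1)"
        unfolding FM True using c012 vge_times_pi[of 1] vmulI[OF vge_pi, of 1 "coeff (sb F1 M) 1" 1] by auto
      then show ?thesis unfolding M(3) using G_integral_from[OF FMi] by blast
    next
      case False
      then have w0: "w = 0" using w(2) by simp
      then have FMe: "sb F M = sb F1 M" using FM by simp
      show ?thesis
      proof (cases "residue_char_2 v")
        case False
        then have odd: "\<not> vge v 1 2" unfolding residue_char_2_def .
        have oH2: "oddH (sb F M) (sb F1 M) w" using oddH_transfer[OF oH M(1)] .
        have nv1: "\<not> vgeP 1 (sb F M)"
        proof
          assume "vgeP 1 (sb F M)"
          then have "vgeP 1 F" using vgeP_sb_iff[OF M(1) dg] by simp
          then show False using bqval_iff[OF F0 dg] w w0 by simp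
        qed
        have "vge v 2 (coeff (sb F M) 0)"
          apply (rule D4)
          using oH2 unfolding oddH_def apply blast+
          using odd nv1 c012 FMe by simp_all
        moreover have "vge v 1 (coeff (sb F M) 1)" using c012 FMe by simp
        ultimately show ?thesis unfolding M(3) using G_integral_from[OF FMi] by blast
      next
        case True
        obtain U \<alpha> m where d: "GL2O U" "(1::int) \<le> \<alpha>" "\<alpha> + 1 \<le> m" "\<forall>i\<le>4. vge v (2*m - \<alpha> * int i) (coeff (sb F U) i)"
          using data[OF char2[OF True]] by blast
        have b: "\<forall>i\<le>4. vge v (max 0 (2*m - \<alpha> * int i)) (coeff (sb F U) i)" using data_bounds[OF int d] .
        have b2: "\<forall>i\<le>2. 2 \<le> max 0 (2*m - \<alpha> * int i)"
        proof (intro allI impI)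
          fix i :: nat assume "i \<le> 2"
          then have "\<alpha> * int i \<le> \<alpha> * 2" using d(2) by (intro mult_left_mono) auto
          then show "2 \<le> max 0 (2*m - \<alpha> * int i)" using d(3) by linarith
        qed
        show ?thesis using frame_step[OF int dg F0 w d(1) b _ b2 st] by simp
      qed
    qed
    show ?thesis using dG Gi eqv lev binary_quartic_def bq_integral_vgeP by blast
  qed
  have p3: "bq_val v G \<ge> 2 \<or> (\<forall>H. bq_step v \<pi> G H \<longrightarrow> bq_val v H \<ge> 2)"
    if nm: "bq_non_minimal v F" and st: "bq_step v \<pi> F G" for G
  proof -
    obtain U \<alpha> m where d: "GL2O U" "(1::int) \<le> \<alpha>" "\<alpha> + 1 \<le> m" "\<forall>i\<le>4. vge v (2*m - \<alpha> * int i) (coeff (sb F U) i)"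
      using data[OF nm] by blast
    define \<beta> where "\<beta> i = max 0 (2*m - \<alpha> * int i)" for i :: nat
    have b: "\<forall>i\<le>4. vge v (\<beta> i) (coeff (sb F U) i)" using data_bounds[OF int d] \<beta>_def by simp
    have ge: "\<beta> i \<ge> 2*m - \<alpha> * int i" for i using \<beta>_def by simp
    have b0: "\<forall>i\<le>4. 0 \<le> \<beta> i" using \<beta>_def by simp
    have b2: "\<forall>i\<le>2. 2 \<le> \<beta> i"
    proof (intro allI impI)
      fix i :: nat assume "i \<le> 2"
      then have "\<alpha> * int i \<le> \<alpha> * 2" using d(2) by (intro mult_left_mono) auto
      then show "2 \<le> \<beta> i" using d(3) ge[of i] by linarith
    qed
    obtain U' where fs: "vgeP 0 G" "degree G \<le> 4" "G \<noteq> 0" "GL2O U'"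
      "\<forall>i\<le>4. vge v (\<beta> i + int i - 2) (coeff (sb G U') i)"
      using frame_step[OF int dg F0 w d(1) b b0 b2 st] by blast
    show ?thesis
    proof (cases "2 \<le> bq_val v G")
      case True then show ?thesis by blast
    next
      case False
      have vG0: "0 \<le> bq_val v G" using bqval_iff[OF fs(3) fs(2)] fs(1) by blast
      obtain w' :: nat where w': "bq_val v G = int w'" "w' \<le> 1" using False vG0
        by (metis nat_0_le nat_le_iff not_le of_nat_1 one_add_one zle_add1_eq_le)
      have a2: "2 \<le> \<alpha>"
      proof (rule ccontr)
        assume "\<not> 2 \<le> \<alpha>"
        then have a1: "\<alpha> = 1" using d(2) by simp
        have "\<forall>i\<le>4. vge v 2 (coeff (sb G U') i)"
        proof (intro allI impI)
          fix i :: nat assume i4: "i \<le> 4"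
          have "2 \<le> \<beta> i + int i - 2" using ge[of i] a1 d(3) by simp
          then show "vge v 2 (coeff (sb G U') i)" using fs(5) i4 vge_mono by blast
        qed
        then have "vgeP 2 (sb G U')" using vgeP_all4 degree_sb by blast
        then have "vgeP 2 G" using vgeP_sb_iff[OF fs(4) fs(2)] by simp
        then show False using bqval_iff[OF fs(3) fs(2)] False by simp
      qed
      have "bq_val v H \<ge> 2" if st2: "bq_step v \<pi> G H" for H
      proof -
        define \<beta>' where "\<beta>' i = \<beta> i + int i - 2" for i :: nat
        have b0': "\<forall>i\<le>4. 0 \<le> \<beta>' i"
        proof (intro allI impI)
          fix i :: nat assume i4: "i \<le> 4"
          show "0 \<le> \<beta>' i"
          proof (cases "i \<le> 2")
            case True then show ?thesis using b2 \<beta>'_def by force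
          next
            case False then show ?thesis using b0 i4 \<beta>'_def by force
          qed
        qed
        have b2': "\<forall>i\<le>2. 2 \<le> \<beta>' i"
        proof (intro allI impI)
          fix i :: nat assume "i \<le> 2"
          then consider "i = 0" | "i = 1" | "i = 2" by linarith
          then show "2 \<le> \<beta>' i"
          proof cases
            case 1 then show ?thesis using ge[of 0] d a2 \<beta>'_def by simp
          next
            case 2 then show ?thesis using ge[of 1] d a2 \<beta>'_def by simp
          next
            case 3 then show ?thesis using ge[of 2] d a2 \<beta>'_def by simp
          qed
        qed
        have bb: "\<forall>i\<le>4. vge v (\<beta>' i) (coeff (sb G U') i)" using fs(5) \<beta>'_def by simp
        obtain U'' where fs2: "vgeP 0 H" "degree H \<le> 4" "H \<noteq> 0" "GL2O U''"
          "\<forall>i\<le>4. vge v (\<beta>' i + int i - 2) (coeff (sb H U'') i)"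
          using frame_step[OF fs(1) fs(2) fs(3) w' fs(4) bb b0' b2' st2] by blast
        have "\<forall>i\<le>4. vge v 2 (coeff (sb H U'') i)"
        proof (intro allI impI)
          fix i :: nat assume i4: "i \<le> 4"
          have "2 \<le> \<beta>' i + int i - 2"
          proof -
            consider "i = 0" | "i = 1" | "i = 2" | "i \<ge> 3" using i4 by linarith
            then show ?thesis
            proof cases
              case 1 then show ?thesis using ge[of 0] d a2 \<beta>'_def by simp
            next
              case 2 then show ?thesis using ge[of 1] d a2 \<beta>'_def by simp
            next
              case 3 then show ?thesis using ge[of 2] d a2 \<beta>'_def by simp
            next
              case 4 then show ?thesis using b0 i4 \<beta>'_def by force
            qed
          qed
          then show "vge v 2 (coeff (sb H U'') i)" using fs2(5) i4 vge_mono by blast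
        qed
        then have "vgeP 2 (sb H U'')" using vgeP_all4 degree_sb by blast
        then have "vgeP 2 H" using vgeP_sb_iff[OF fs2(4) fs2(2)] by simp
        then show ?thesis using bqval_iff[OF fs2(3) fs2(2)] by simp
      qed
      then show ?thesis by blast
    qed
  qed
  show ?thesis using p1 p2 p3 by blast
qed

end

theorem theorem4p2:
  fixes v :: "'a::field \<Rightarrow> int" and \<pi> :: 'a and F :: "'a poly"
  assumes dv: "discrete_valuation v"
    and unif: "\<pi> \<noteq> 0" "v \<pi> = 1"
    and perfect: "residue_field_perfect v"
    and quartic: "binary_quartic F" and integral: "bq_integral v F"
    and nonsing: "bq_nonsingular F"
    and vF: "bq_val v F \<in> {0, 1}"
    and level_pos: "bq_level v F > 0"
    and char2: "residue_char_2 v \<Longrightarrow> bq_non_minimal v F"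
  shows "(\<exists>x0 z0. bq_root_mult_ge v (bq_F1 v \<pi> F) x0 z0 3)
       \<and> (\<forall>G. bq_step v \<pi> F G \<longrightarrow>
            binary_quartic G \<and> bq_integral v G \<and> bq_equiv F G \<and> bq_level v G = bq_level v F)
       \<and> (bq_non_minimal v F \<longrightarrow>
            (\<forall>G. bq_step v \<pi> F G \<longrightarrow>
               bq_val v G \<ge> 2 \<or> (\<forall>H. bq_step v \<pi> G H \<longrightarrow> bq_val v H \<ge> 2)))"
  proof -
  interpret dvr v \<pi> using dv unif by unfold_locales auto
  show ?thesis using main[OF perfect quartic integral nonsing vF level_pos char2] by blast
qed

end
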